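(* Let $k,d\ge1$, let $x_1,\dots,x_d\in\mathbb T^k$ be free, let $M\ge1$ be an integer, let $A,B\subseteq\mathbb T^k$ be Baire measurable and let $\mathcal G=(A,B,E)$ with $E:=\{(a,b)\in A\times B: b-a\in V_M\}$, where $V_M:=\{\sum_{j=1}^dn_jx_j:n\in\mathbb Z^d,\|n\|_\infty\le M\}$. Let $i\ge1$, $r_i\in\mathbb N$, and let $A_i\subseteq A$, $B_i\subseteq B$ be Baire measurable sets such that at least one of $A_i,B_i$ is empty and $A_i\cup B_i$ is $(r_i+4M)$-sparse. Then for every Baire measurable $\mathcal G$-extendable matching $\mathcal M_{i-1}$ there is a Baire measurable matching $\mathcal M_i\supseteq\mathcal M_{i-1}$ in $\mathcal G$ such that: $\mathcal M_i^{-1}(B)\supseteq A_i$ and $\mathcal M_i(A)\supseteq B_i$; for every $u\in\mathbb T^k$, any two distinct pairs $(a,b),(x,y)\in(\mathcal M_i\setminus\mathcal M_{i-1})_u$ satisfy $\operatorname{dist}(\{a,b\},\{x,y\})>r_i+2M$; and for every $(a,b)\in\mathcal M_i\setminus\mathcal M_{i-1}$, the set $\mathcal M_{i-1}\cup\{(a,b)\}$ is a $\mathcal G$-extendable matching.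
   Context: $\mathbb T^k=\mathbb R^k/\mathbb Z^k\cong[0,1)^k$; vectors are free if no non-trivial integer combination is $0$ in $\mathbb T^k$. For $X\subseteq\mathbb T^k$, $X_u:=\{n\in\mathbb Z^d:u+\sum n_jx_j\in X\}$; $X$ is $r$-sparse if for each $u$ distinct elements of $X_u$ are at $L^\infty$-distance $>r$. A matching in $\mathcal G$ is a set of edges forming a partial injection $A\to B$; it is perfect if it is a bijection $A\to B$; a matching is $\mathcal G$-extendable if it is contained in some (not necessarily measurable) perfect matching of $\mathcal G$. A matching $\mathcal M$ is Baire measurable if for each $v\in V_M$ the set $\{a\in A:\mathcal M(a)-a=v\}$ is Baire measurable. For a set $\mathcal N$ of edges and $u\in\mathbb T^k$, $\mathcal N_u:=\{(n,m)\in\mathbb Z^d\times\mathbb Z^d:(u+\sum n_jx_j,\,u+\sum m_jx_j)\in\mathcal N\}$. Distance between finite sets $X,Y\subseteq\mathbb Z^d$ is $\min\{\|x-y\|_\infty:x\in X,y\in Y\}$. *)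

theory Defs
  imports "HOL-Analysis.Analysis"
begin

section \<open>The torus T^k, represented by [0,1)^k inside real^'k\<close>

definition tfrac :: "real^'k \<Rightarrow> real^'k" where
  "tfrac v = (\<chi> i. frac (v $ i))"

definition torus :: "(real^'k) set" where
  "torus = {v. \<forall>i. 0 \<le> v $ i \<and> v $ i < 1}"

definition tadd :: "real^'k \<Rightarrow> real^'k \<Rightarrow> real^'k" where
  "tadd u v = tfrac (u + v)"

definition tsub :: "real^'k \<Rightarrow> real^'k \<Rightarrow> real^'k" where
  "tsub u v = tfrac (u - v)"

text \<open>Quotient topology of T^k = R^k/Z^k on the representatives [0,1)^k.\<close>
definition torus_top :: "(real^'k) topology" where
  "torus_top = topology (\<lambda>U. U \<subseteq> torus \<and> open (tfrac -` U))"

lemma istopology_torus: "istopology (\<lambda>U::(real^'k) set. U \<subseteq> torus \<and> open (tfrac -` U))"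
  unfolding istopology_def
  by (auto simp: vimage_Union intro!: open_Union)

definition nowhere_dense_in :: "'a topology \<Rightarrow> 'a set \<Rightarrow> bool" where
  "nowhere_dense_in T S \<longleftrightarrow> S \<subseteq> topspace T \<and> T interior_of (T closure_of S) = {}"

definition meagre_in :: "'a topology \<Rightarrow> 'a set \<Rightarrow> bool" where
  "meagre_in T S \<longleftrightarrow> S \<subseteq> topspace T \<and>
     (\<exists>F. countable F \<and> (\<forall>N\<in>F. nowhere_dense_in T N) \<and> S \<subseteq> \<Union>F)"

definition baire_measurable_in :: "'a topology \<Rightarrow> 'a set \<Rightarrow> bool" where
  "baire_measurable_in T S \<longleftrightarrow> S \<subseteq> topspace T \<and>
     (\<exists>U. openin T U \<and> meagre_in T ((S - U) \<union> (U - S)))"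

definition lin :: "('d::finite \<Rightarrow> real^'k) \<Rightarrow> int^'d \<Rightarrow> real^'k" where
  "lin x n = tfrac (\<Sum>j\<in>UNIV. real_of_int (n $ j) *\<^sub>R x j)"

definition free_vecs :: "('d::finite \<Rightarrow> real^'k) \<Rightarrow> bool" where
  "free_vecs x \<longleftrightarrow> (\<forall>n::int^'d. lin x n = 0 \<longrightarrow> n = 0)"

definition linf_dist :: "int^'d::finite \<Rightarrow> int^'d \<Rightarrow> int" where
  "linf_dist n m = Max (range (\<lambda>j. \<bar>n $ j - m $ j\<bar>))"

definition VM :: "('d::finite \<Rightarrow> real^'k) \<Rightarrow> nat \<Rightarrow> (real^'k) set" where
  "VM x M = {lin x n | n. \<forall>j. \<bar>n $ j\<bar> \<le> int M}"

definition section_set :: "('d::finite \<Rightarrow> real^'k) \<Rightarrow> (real^'k) set \<Rightarrow> real^'k \<Rightarrow> (int^'d) set" where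
  "section_set x X u = {n. tadd u (lin x n) \<in> X}"

definition sparse :: "('d::finite \<Rightarrow> real^'k) \<Rightarrow> nat \<Rightarrow> (real^'k) set \<Rightarrow> bool" where
  "sparse x r X \<longleftrightarrow> (\<forall>u\<in>torus. \<forall>n\<in>section_set x X u. \<forall>m\<in>section_set x X u.
      n \<noteq> m \<longrightarrow> linf_dist n m > int r)"

definition edge_section :: "('d::finite \<Rightarrow> real^'k) \<Rightarrow> ((real^'k) \<times> (real^'k)) set \<Rightarrow> real^'k
    \<Rightarrow> ((int^'d) \<times> (int^'d)) set" where
  "edge_section x N u = {(n, m). (tadd u (lin x n), tadd u (lin x m)) \<in> N}"

definition edges :: "('d::finite \<Rightarrow> real^'k) \<Rightarrow> nat \<Rightarrow> (real^'k) set \<Rightarrow> (real^'k) set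
    \<Rightarrow> ((real^'k) \<times> (real^'k)) set" where
  "edges x M A B = {(a, b). a \<in> A \<and> b \<in> B \<and> tsub b a \<in> VM x M}"

definition is_matching :: "('d::finite \<Rightarrow> real^'k) \<Rightarrow> nat \<Rightarrow> (real^'k) set \<Rightarrow> (real^'k) set
    \<Rightarrow> ((real^'k) \<times> (real^'k)) set \<Rightarrow> bool" where
  "is_matching x M A B N \<longleftrightarrow> N \<subseteq> edges x M A B \<and>
     (\<forall>a b a' b'. (a, b) \<in> N \<longrightarrow> (a', b') \<in> N \<longrightarrow> (a = a' \<longleftrightarrow> b = b'))"

definition is_perfect_matching :: "('d::finite \<Rightarrow> real^'k) \<Rightarrow> nat \<Rightarrow> (real^'k) set \<Rightarrow> (real^'k) set
    \<Rightarrow> ((real^'k) \<times> (real^'k)) set \<Rightarrow> bool" where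
  "is_perfect_matching x M A B N \<longleftrightarrow> is_matching x M A B N \<and> Domain N = A \<and> Range N = B"

definition extendable :: "('d::finite \<Rightarrow> real^'k) \<Rightarrow> nat \<Rightarrow> (real^'k) set \<Rightarrow> (real^'k) set
    \<Rightarrow> ((real^'k) \<times> (real^'k)) set \<Rightarrow> bool" where
  "extendable x M A B N \<longleftrightarrow> is_matching x M A B N \<and>
     (\<exists>P. is_perfect_matching x M A B P \<and> N \<subseteq> P)"

definition baire_matching :: "('d::finite \<Rightarrow> real^'k) \<Rightarrow> nat \<Rightarrow> ((real^'k) \<times> (real^'k)) set \<Rightarrow> bool" where
  "baire_matching x M N \<longleftrightarrow>
     (\<forall>v\<in>VM x M. baire_measurable_in torus_top {a. \<exists>b. (a, b) \<in> N \<and> tsub b a = v})"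

end

theory Submission
  imports Defs
begin



lemma tfrac_nth[simp]: "tfrac v $ i = frac (v $ i)"
  by (simp add: tfrac_def)

lemma tfrac_in_torus[simp]: "tfrac v \<in> torus"
  by (simp add: torus_def frac_lt_1)

lemma tfrac_id: "v \<in> torus \<Longrightarrow> tfrac v = v"
  by (simp add: torus_def vec_eq_iff frac_eq)

lemma tfrac_tfrac[simp]: "tfrac (tfrac v) = tfrac v"
  by (simp add: vec_eq_iff)

lemma tfrac_add_left[simp]: "tfrac (tfrac a + b) = tfrac (a + b)"
  by (simp add: vec_eq_iff)

lemma tfrac_add_right[simp]: "tfrac (a + tfrac b) = tfrac (a + b)"
  by (simp add: vec_eq_iff)

lemma tfrac_diff_right[simp]: "tfrac (a - tfrac b) = tfrac (a - b)"
  by (simp add: vec_eq_iff frac_diff_simp)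

lemma frac_diff_left': "frac (frac a - b) = frac (a - b)"
  by (metis diff_conv_add_uminus frac_add_simps(1))

lemma tfrac_diff_left[simp]: "tfrac (tfrac a - b) = tfrac (a - b)"
  by (simp add: vec_eq_iff frac_diff_left')

lemma tfrac_eq_iff: "tfrac a = tfrac b \<longleftrightarrow> tfrac (a - b) = 0"
proof
  assume "tfrac a = tfrac b"
  hence "\<And>i. frac (a $ i) = frac (b $ i)" by (simp add: vec_eq_iff)
  hence "\<And>i. frac (a $ i - b $ i) = 0" by (rule frac_diff_eq)
  thus "tfrac (a - b) = 0" by (simp add: vec_eq_iff)
next
  assume "tfrac (a - b) = 0"
  hence "\<And>i. frac (a $ i - b $ i) = 0" by (simp add: vec_eq_iff del: frac_eq_0_iff)
  hence "\<And>i. frac (a $ i) = frac (b $ i)" by (rule frac_diff_zero)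
  thus "tfrac a = tfrac b" by (simp add: vec_eq_iff)
qed

lemma tfrac_zero[simp]: "tfrac 0 = 0"
  by (simp add: vec_eq_iff)

lemma zero_in_torus[simp]: "0 \<in> torus"
  by (simp add: torus_def)

lemma torus_cancel:
  assumes "a \<in> torus" "b \<in> torus" "tfrac (a - b) = 0"
  shows "a = b"
proof -
  have "tfrac a = tfrac b" using assms(3) tfrac_eq_iff by blast
  thus ?thesis using assms tfrac_id by metis
qed

lemma tfrac_neg_cong:
  assumes "tfrac a = tfrac b" shows "tfrac (- a) = tfrac (- b)"
  using assms by (simp add: vec_eq_iff frac_neg_eq_iff)

definition Svec :: "('d::finite \<Rightarrow> real^'k) \<Rightarrow> int^'d \<Rightarrow> real^'k" where
  "Svec x n = (\<Sum>j\<in>UNIV. real_of_int (n $ j) *\<^sub>R x j)"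

lemma lin_Svec: "lin x n = tfrac (Svec x n)"
  by (simp add: lin_def Svec_def)

lemma Svec_add: "Svec x (n + m) = Svec x n + Svec x m"
  by (simp add: Svec_def scaleR_add_left sum.distrib)

lemma Svec_diff: "Svec x (n - m) = Svec x n - Svec x m"
  by (simp add: Svec_def scaleR_diff_left sum_subtractf)

lemma Svec_neg: "Svec x (- n) = - Svec x n"
  by (simp add: Svec_def sum_negf)

lemma Svec_zero[simp]: "Svec x 0 = 0"
  by (simp add: Svec_def)

lemma lin_in_torus[simp]: "lin x n \<in> torus"
  by (simp add: lin_Svec)

lemma lin_zero[simp]: "lin x 0 = 0"
  by (simp add: lin_Svec)

lemma lin_inj:
  assumes "free_vecs x" "lin x n = lin x m" shows "n = m"
proof -
  have "tfrac (Svec x n - Svec x m) = 0" using assms(2) by (simp add: lin_Svec tfrac_eq_iff)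
  hence "lin x (n - m) = 0" by (simp add: lin_Svec Svec_diff)
  thus ?thesis using assms(1) free_vecs_def by fastforce
qed

lemma lin_eq_iff[simp]: "free_vecs x \<Longrightarrow> lin x n = lin x m \<longleftrightarrow> n = m"
  using lin_inj by blast

lemma tadd_lin: "tadd c (lin x w) = tfrac (c + Svec x w)"
  by (simp add: tadd_def lin_Svec)

lemma tadd_lin_assoc[simp]: "tadd (tadd c (lin x w)) (lin x z) = tadd c (lin x (w + z))"
  by (simp add: tadd_lin Svec_add add.assoc)

lemma tadd_lin_zero[simp]: "c \<in> torus \<Longrightarrow> tadd c (lin x 0) = c"
  by (simp add: tadd_def tfrac_id)

lemma tadd_in_torus[simp]: "tadd a b \<in> torus"
  by (simp add: tadd_def)

lemma tsub_in_torus[simp]: "tsub a b \<in> torus"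
  by (simp add: tsub_def)

lemma tadd_lin_inj[simp]:
  assumes "free_vecs x"
  shows "tadd c (lin x w) = tadd c (lin x w') \<longleftrightarrow> w = w'"
proof
  assume "tadd c (lin x w) = tadd c (lin x w')"
  hence "tfrac ((c + Svec x w) - (c + Svec x w')) = 0" by (simp add: tadd_lin tfrac_eq_iff)
  hence "lin x w = lin x w'" by (simp add: lin_Svec tfrac_eq_iff)
  thus "w = w'" using assms by simp
qed simp

lemma tsub_tadd_lin[simp]: "tsub (tadd c (lin x m)) (tadd c (lin x n)) = lin x (m - n)"
proof -
  have "tsub (tadd c (lin x m)) (tadd c (lin x n)) = tfrac ((c + Svec x m) - (c + Svec x n))"
    by (simp add: tsub_def tadd_def lin_Svec)
  also have "(c + Svec x m) - (c + Svec x n) = Svec x (m - n)" by (simp add: Svec_diff)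
  finally show ?thesis by (simp add: lin_Svec)
qed

lemma tsub_lin_tadd[simp]: "tsub (tadd c (lin x w)) (lin x z) = tadd c (lin x (w - z))"
proof -
  have "tsub (tadd c (lin x w)) (lin x z) = tfrac ((c + Svec x w) - Svec x z)"
    by (simp add: tsub_def tadd_def lin_Svec)
  also have "(c + Svec x w) - Svec x z = c + Svec x (w - z)" by (simp add: Svec_diff)
  finally show ?thesis by (simp add: lin_Svec tadd_def)
qed

lemma tadd_tsub: "b \<in> torus \<Longrightarrow> tadd a (tsub b a) = b"
  by (simp add: tadd_def tsub_def tfrac_id)

lemma tsub_tadd: "v \<in> torus \<Longrightarrow> tsub (tadd a v) a = v"
  by (simp add: tadd_def tsub_def tfrac_id)

lemma tsub_tsub: "v \<in> torus \<Longrightarrow> tsub b (tsub b v) = v"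
  by (simp add: tsub_def tfrac_id)

lemma tadd_tsub2: "b \<in> torus \<Longrightarrow> tadd (tsub b v) v = b"
  by (simp add: tadd_def tsub_def tfrac_id)

lemma tadd_cancel:
  assumes "a \<in> torus" "a' \<in> torus" "tadd a v = tadd a' v" shows "a = a'"
proof -
  have "tfrac ((a + v) - (a' + v)) = 0" using assms(3) by (simp add: tadd_def tfrac_eq_iff)
  thus ?thesis by (intro torus_cancel[OF assms(1,2)]) simp
qed

lemma tsub_cancel:
  assumes "a \<in> torus" "a' \<in> torus" "tsub b a = tsub b a'" shows "a = a'"
proof -
  have "tfrac ((b - a) - (b - a')) = 0" using assms(3) by (simp add: tsub_def tfrac_eq_iff)
  hence "tfrac (- (a - a')) = 0" by (simp add: algebra_simps)
  hence "tfrac (a - a') = 0" using tfrac_neg_cong[of "- (a - a')" 0] by simp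
  thus ?thesis by (intro torus_cancel[OF assms(1,2)])
qed

lemma tsub_swap:
  assumes "tsub b a = lin x z" shows "tsub a b = lin x (- z)"
proof -
  have "tfrac (b - a) = tfrac (Svec x z)" using assms by (simp add: tsub_def lin_Svec)
  hence "tfrac (- (b - a)) = tfrac (- Svec x z)" by (rule tfrac_neg_cong)
  thus ?thesis by (simp add: tsub_def lin_Svec Svec_neg)
qed

definition Zb :: "nat \<Rightarrow> (int^'d::finite) set" where
  "Zb M = {z. \<forall>j. \<bar>z $ j\<bar> \<le> int M}"

lemma finite_Zb: "finite (Zb M :: (int^'d::finite) set)"
proof -
  have "Zb M \<subseteq> vec_lambda ` (PiE UNIV (\<lambda>_::'d. {- int M..int M}))"
  proof
    fix z :: "int^'d" assume "z \<in> Zb M"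
    hence "(\<lambda>j. z $ j) \<in> PiE UNIV (\<lambda>_. {- int M..int M})" by (clarsimp simp: Zb_def PiE_iff) (metis abs_le_iff minus_le_iff)
    thus "z \<in> vec_lambda ` (PiE UNIV (\<lambda>_::'d. {- int M..int M}))"
      by (metis image_eqI vec_nth_inverse)
  qed
  thus ?thesis by (rule finite_subset) (simp add: finite_PiE)
qed

lemma Zb_neg: "z \<in> Zb M \<Longrightarrow> - z \<in> Zb M"
  by (simp add: Zb_def)

lemma zero_Zb[simp]: "0 \<in> Zb M"
  by (simp add: Zb_def)

lemma VM_eq: "VM x M = lin x ` Zb M"
  by (auto simp: VM_def Zb_def)

lemma finite_VM: "finite (VM x M)"
  by (simp add: VM_eq finite_Zb)

lemma VM_torus: "VM x M \<subseteq> torus"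
  by (auto simp: VM_eq)

lemma zero_VM[simp]: "0 \<in> VM x M"
  by (auto simp: VM_eq intro: image_eqI[of _ _ 0])




section \<open>General Baire measurability\<close>

lemma nd_subset: "nowhere_dense_in X N \<Longrightarrow> N' \<subseteq> N \<Longrightarrow> nowhere_dense_in X N'"
proof -
  assume a: "nowhere_dense_in X N" "N' \<subseteq> N"
  have "X interior_of (X closure_of N') \<subseteq> X interior_of (X closure_of N)"
    using a(2) by (intro interior_of_mono closure_of_mono)
  thus ?thesis using a unfolding nowhere_dense_in_def by blast
qed

lemma meagre_inI: "S \<subseteq> topspace X \<Longrightarrow> countable G \<Longrightarrow> (\<forall>N\<in>G. nowhere_dense_in X N) \<Longrightarrow> S \<subseteq> \<Union>G \<Longrightarrow> meagre_in X S"
  unfolding meagre_in_def by (rule conjI, assumption, rule exI[of _ G], rule conjI, assumption, rule conjI)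

lemma bm_inI: "S \<subseteq> topspace X \<Longrightarrow> openin X U \<Longrightarrow> meagre_in X ((S - U) \<union> (U - S)) \<Longrightarrow> baire_measurable_in X S"
  unfolding baire_measurable_in_def by (rule conjI, assumption, rule exI[of _ U], rule conjI)

lemma meagre_inE:
  assumes a: "meagre_in X T"
    and h: "\<And>G. countable G \<Longrightarrow> \<forall>N\<in>G. nowhere_dense_in X N \<Longrightarrow> T \<subseteq> \<Union>G \<Longrightarrow> T \<subseteq> topspace X \<Longrightarrow> P"
  shows P
proof -
  have t: "T \<subseteq> topspace X" using a unfolding meagre_in_def by (rule conjunct1)
  have "\<exists>G. countable G \<and> (\<forall>N\<in>G. nowhere_dense_in X N) \<and> T \<subseteq> \<Union>G"
    using a unfolding meagre_in_def by (rule conjunct2)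
  then obtain G where "countable G" "\<forall>N\<in>G. nowhere_dense_in X N" "T \<subseteq> \<Union>G" by (elim exE conjE)
  thus P using h t by blast
qed

lemma meagre_subset: "meagre_in X S \<Longrightarrow> S' \<subseteq> S \<Longrightarrow> meagre_in X S'"
proof -
  assume a: "meagre_in X S" "S' \<subseteq> S"
  then obtain G where G: "countable G" "\<forall>N\<in>G. nowhere_dense_in X N" "S \<subseteq> \<Union>G" "S \<subseteq> topspace X"
    unfolding meagre_in_def by blast
  show ?thesis by (rule meagre_inI[OF _ G(1,2)]) (use a G in auto)
qed

lemma meagre_empty[simp]: "meagre_in X {}"
  unfolding meagre_in_def by (auto intro!: exI[of _ "{}"])

lemma meagre_countable_Union:
  assumes "countable F" "\<And>S. S \<in> F \<Longrightarrow> meagre_in X S"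
  shows "meagre_in X (\<Union>F)"
proof -
  have "\<forall>S\<in>F. \<exists>G. countable G \<and> (\<forall>N\<in>G. nowhere_dense_in X N) \<and> S \<subseteq> \<Union>G"
  proof
    fix S assume "S \<in> F"
    hence "meagre_in X S" by (rule assms(2))
    thus "\<exists>G. countable G \<and> (\<forall>N\<in>G. nowhere_dense_in X N) \<and> S \<subseteq> \<Union>G"
      unfolding meagre_in_def by (rule conjunct2)
  qed
  from bchoice[OF this] obtain g where g: "\<forall>S\<in>F. countable (g S) \<and> (\<forall>N\<in>g S. nowhere_dense_in X N) \<and> S \<subseteq> \<Union>(g S)"
    by blast
  have g1: "countable (g S)" "\<forall>N\<in>g S. nowhere_dense_in X N" "S \<subseteq> \<Union>(g S)" if "S \<in> F" for S
    using g that by auto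
  have c: "countable (\<Union>(g ` F))" using assms(1) g1(1) by (intro countable_UN)
  have n: "\<forall>N\<in>\<Union>(g ` F). nowhere_dense_in X N"
  proof
    fix N assume "N \<in> \<Union>(g ` F)"
    then obtain S where "S \<in> F" "N \<in> g S" by blast
    thus "nowhere_dense_in X N" using g1(2) by blast
  qed
  have u: "\<Union>F \<subseteq> \<Union>(\<Union>(g ` F))"
  proof
    fix y assume "y \<in> \<Union>F"
    then obtain S where "S \<in> F" "y \<in> S" by blast
    thus "y \<in> \<Union>(\<Union>(g ` F))" using g1(3) by blast
  qed
  have t: "\<Union>F \<subseteq> topspace X"
  proof
    fix y assume "y \<in> \<Union>F"
    then obtain S where "S \<in> F" "y \<in> S" by blast
    thus "y \<in> topspace X" using assms(2)[of S] unfolding meagre_in_def by blast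
  qed
  show ?thesis by (rule meagre_inI[OF t c n u])
qed

lemma meagre_Un: "meagre_in X S \<Longrightarrow> meagre_in X T \<Longrightarrow> meagre_in X (S \<union> T)"
  using meagre_countable_Union[of "{S, T}" X] by auto

lemma nd_closure_minus:
  assumes "openin X U"
  shows "nowhere_dense_in X (X closure_of U - U)"
proof -
  let ?N = "X closure_of U - U"
  have c1: "X closure_of ?N \<subseteq> X closure_of U"
    by (metis Diff_subset closure_of_closure_of closure_of_mono)
  have "closedin X (topspace X - U)" using assms by blast
  moreover have "?N \<subseteq> topspace X - U" using closure_of_subset_topspace[of X U] by blast
  ultimately have c2: "X closure_of ?N \<subseteq> topspace X - U" by (rule closure_of_minimal[rotated])
  let ?W = "X interior_of (X closure_of ?N)"
  have "?W \<inter> U = {}" using c2 interior_of_subset[of X "X closure_of ?N"] by blast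
  hence "?W \<inter> X closure_of U = {}"
    using openin_Int_closure_of_eq_empty[of X ?W U] by simp
  hence "?W = {}" using c1 interior_of_subset[of X "X closure_of ?N"] by blast
  thus ?thesis unfolding nowhere_dense_in_def using closure_of_subset_topspace[of X U] by blast
qed

lemma meagre_nd: "nowhere_dense_in X N \<Longrightarrow> meagre_in X N"
  unfolding meagre_in_def by (auto simp: nowhere_dense_in_def intro!: exI[of _ "{N}"])

lemma bm_compl:
  assumes "baire_measurable_in X S"
  shows "baire_measurable_in X (topspace X - S)"
proof -
  obtain U where U: "openin X U" "meagre_in X ((S - U) \<union> (U - S))" "S \<subseteq> topspace X"
    using assms unfolding baire_measurable_in_def by blast
  let ?V = "topspace X - X closure_of U"
  have o: "openin X ?V" by (rule openin_diff[OF openin_topspace closedin_closure_of])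
  have sub: "((topspace X - S) - ?V) \<union> (?V - (topspace X - S))
      \<subseteq> ((S - U) \<union> (U - S)) \<union> (X closure_of U - U)"
    using closure_of_subset[of U X] openin_subset[OF U(1)] by blast
  have m: "meagre_in X (((S - U) \<union> (U - S)) \<union> (X closure_of U - U))"
    by (rule meagre_Un[OF U(2) meagre_nd[OF nd_closure_minus[OF U(1)]]])
  show ?thesis by (rule bm_inI[OF _ o meagre_subset[OF m sub]]) blast
qed

lemma bm_countable_Union:
  assumes "countable F" "\<And>S. S \<in> F \<Longrightarrow> baire_measurable_in X S"
  shows "baire_measurable_in X (\<Union>F)"
proof -
  have "\<forall>S\<in>F. \<exists>U. openin X U \<and> meagre_in X ((S - U) \<union> (U - S))"
  proof
    fix S assume "S \<in> F"
    hence "baire_measurable_in X S" by (rule assms(2))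
    thus "\<exists>U. openin X U \<and> meagre_in X ((S - U) \<union> (U - S))"
      unfolding baire_measurable_in_def by (rule conjunct2)
  qed
  from bchoice[OF this] obtain g where g: "\<forall>S\<in>F. openin X (g S) \<and> meagre_in X ((S - g S) \<union> (g S - S))"
    by blast
  have o: "openin X (\<Union>(g ` F))" using g by blast
  have sub: "(\<Union>F - \<Union>(g ` F)) \<union> (\<Union>(g ` F) - \<Union>F) \<subseteq> \<Union>((\<lambda>S. (S - g S) \<union> (g S - S)) ` F)"
    by blast
  have m: "meagre_in X (\<Union>((\<lambda>S. (S - g S) \<union> (g S - S)) ` F))"
    using g assms(1) by (intro meagre_countable_Union) auto
  have t: "\<Union>F \<subseteq> topspace X" using assms(2) unfolding baire_measurable_in_def by blast
  show ?thesis by (rule bm_inI[OF t o meagre_subset[OF m sub]])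
qed

lemma bm_open: "openin X U \<Longrightarrow> baire_measurable_in X U"
  unfolding baire_measurable_in_def using openin_subset by fastforce

lemma bm_homeo:
  assumes hom: "homeomorphic_map X Y f" and bm: "baire_measurable_in X S"
  shows "baire_measurable_in Y (f ` S)"
proof -
  obtain U where U: "openin X U" "meagre_in X ((S - U) \<union> (U - S))" and S: "S \<subseteq> topspace X"
    using bm unfolding baire_measurable_in_def by blast
  have inj: "inj_on f (topspace X)" by (rule homeomorphic_imp_injective_map[OF hom])
  have nd: "nowhere_dense_in Y (f ` N)" if "nowhere_dense_in X N" for N
  proof -
    have N: "N \<subseteq> topspace X" using that unfolding nowhere_dense_in_def by (rule conjunct1)
    have "Y closure_of (f ` N) = f ` (X closure_of N)" by (rule homeomorphic_map_closure_of[OF hom N])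
    hence "Y interior_of (Y closure_of (f ` N)) = f ` (X interior_of (X closure_of N))"
      using homeomorphic_map_interior_of[OF hom closure_of_subset_topspace] by simp
    moreover have "f ` N \<subseteq> topspace Y" using image_mono[OF N, of f] homeomorphic_imp_surjective_map[OF hom] by simp
    ultimately show ?thesis using that unfolding nowhere_dense_in_def by simp
  qed
  have mg: "meagre_in Y (f ` T)" if mT: "meagre_in X T" for T
  proof -
    obtain G where G: "countable G" "\<forall>N\<in>G. nowhere_dense_in X N" "T \<subseteq> \<Union>G" "T \<subseteq> topspace X"
      by (rule meagre_inE[OF mT])
    have c: "countable ((image f) ` G)" using G by simp
    have n: "\<forall>N\<in>(image f) ` G. nowhere_dense_in Y N"
    proof
      fix N' assume "N' \<in> (image f) ` G"
      then obtain N where N: "N \<in> G" "N' = f ` N" by (rule imageE)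
      have "nowhere_dense_in X N" using G(2) N(1) by (rule bspec)
      thus "nowhere_dense_in Y N'" unfolding N(2) by (rule nd)
    qed
    have u: "f ` T \<subseteq> \<Union>((image f) ` G)"
    proof
      fix y assume "y \<in> f ` T"
      then obtain t where t: "t \<in> T" "y = f t" by (rule imageE)
      then obtain N where "N \<in> G" "t \<in> N" using G(3) by (meson UnionE subsetD)
      thus "y \<in> \<Union>((image f) ` G)" using t by (intro UnionI[of "f ` N"]) auto
    qed
    have t: "f ` T \<subseteq> topspace Y" using image_mono[OF G(4), of f] homeomorphic_imp_surjective_map[OF hom] by simp
    show ?thesis by (rule meagre_inI[OF t c n u])
  qed
  have o: "openin Y (f ` U)" using homeomorphic_map_openness[OF hom openin_subset[OF U(1)]] U by simp
  have e: "(f ` S - f ` U) \<union> (f ` U - f ` S) = f ` ((S - U) \<union> (U - S))"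
    using inj S openin_subset[OF U(1)] unfolding inj_on_def by blast
  have t: "f ` S \<subseteq> topspace Y" using image_mono[OF S, of f] homeomorphic_imp_surjective_map[OF hom] by simp
  show ?thesis using bm_inI[OF t o] mg[OF U(2)] e by simp
qed

section \<open>The torus topology\<close>

lemma openin_torus_top_eq: "openin torus_top = (\<lambda>U. U \<subseteq> torus \<and> open (tfrac -` U))"
  unfolding torus_top_def by (rule topology_inverse'[OF istopology_torus])

lemma openin_torus_top: "openin torus_top U \<longleftrightarrow> U \<subseteq> torus \<and> open (tfrac -` U)"
  by (simp only: openin_torus_top_eq)

lemma topspace_torus_top[simp]: "topspace torus_top = (torus :: (real^'k) set)"
proof -
  have o: "openin torus_top (torus :: (real^'k) set)" unfolding openin_torus_top by (simp add: vimage_def)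
  have "openin torus_top (topspace (torus_top :: (real^'k) topology))" by (rule openin_topspace)
  hence "topspace (torus_top :: (real^'k) topology) \<subseteq> torus" unfolding openin_torus_top by (rule conjunct1)
  moreover have "(torus :: (real^'k) set) \<subseteq> topspace torus_top" by (rule openin_subset[OF o])
  ultimately show ?thesis by (rule subset_antisym)
qed

lemma open_vimage_transl:
  fixes c :: "real^'k"
  assumes "U \<subseteq> torus" "open (tfrac -` U)"
  shows "open (tfrac -` {a \<in> torus. tfrac (a + c) \<in> U})"
proof -
  have eq: "tfrac -` {a \<in> torus. tfrac (a + c) \<in> U} = (\<lambda>y. y + c) -` (tfrac -` U)"
    by (simp add: vimage_def)
  have "\<And>y. continuous (at y) (\<lambda>y. y + c)" by (intro continuous_intros)
  hence "open ((\<lambda>y. y + c) -` (tfrac -` U))" using assms(2) by (rule continuous_open_vimage[rotated])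
  thus ?thesis by (simp only: eq)
qed

lemma transl_cm:
  fixes c :: "real^'k"
  shows "continuous_map torus_top torus_top (\<lambda>a. tfrac (a + c))"
proof -
  have "openin torus_top {x \<in> topspace torus_top. tfrac (x + c) \<in> U}" if "openin torus_top U" for U
  proof -
    have "U \<subseteq> torus" "open (tfrac -` U)" using that unfolding openin_torus_top by auto
    hence "open (tfrac -` {a \<in> torus. tfrac (a + c) \<in> U})" by (rule open_vimage_transl)
    moreover have "{a \<in> torus. tfrac (a + c) \<in> U} \<subseteq> torus" by blast
    ultimately show ?thesis unfolding openin_torus_top topspace_torus_top by blast
  qed
  moreover have "(\<lambda>a. tfrac (a + c)) \<in> topspace torus_top \<rightarrow> topspace torus_top" by simp
  ultimately show ?thesis unfolding continuous_map_def by blast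
qed

lemma transl_homeo:
  fixes c :: "real^'k"
  shows "homeomorphic_map torus_top torus_top (\<lambda>a. tfrac (a + c))"
proof -
  have inv1: "\<forall>a \<in> topspace torus_top. tfrac (tfrac (a + c) + - c) = a"
    by (simp add: tfrac_id)
  have inv2: "\<forall>a \<in> topspace torus_top. tfrac (tfrac (a + - c) + c) = a"
    by (simp add: tfrac_id)
  have "homeomorphic_maps torus_top torus_top (\<lambda>a. tfrac (a + c)) (\<lambda>a. tfrac (a + - c))"
    unfolding homeomorphic_maps_def using transl_cm[of c] transl_cm[of "- c"] inv1 inv2 by blast
  thus ?thesis by (rule homeomorphic_maps_imp_map)
qed

section \<open>Predicates with Baire measurable extension\<close>

definition bmp :: "(real^'k \<Rightarrow> bool) \<Rightarrow> bool" where
  "bmp P \<longleftrightarrow> baire_measurable_in torus_top {c \<in> torus. P c}"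

lemma bm_torus_sub: "baire_measurable_in torus_top S \<Longrightarrow> S \<subseteq> torus"
  unfolding baire_measurable_in_def by simp

lemma bmp_mem: "baire_measurable_in torus_top S \<Longrightarrow> bmp (\<lambda>c. c \<in> S)"
  unfolding bmp_def using bm_torus_sub by (metis (no_types, lifting) Collect_cong Collect_mem_eq inf_absorb2 Int_def)

lemma bmp_bm: "bmp (\<lambda>c. c \<in> S) \<Longrightarrow> S \<subseteq> torus \<Longrightarrow> baire_measurable_in torus_top S"
  unfolding bmp_def by (metis (no_types, lifting) Collect_cong Collect_mem_eq inf_absorb2 Int_def)

lemma bmp_cong: "(\<And>c. c \<in> torus \<Longrightarrow> P c = Q c) \<Longrightarrow> bmp P \<Longrightarrow> bmp Q"
  unfolding bmp_def by (metis (mono_tags, lifting) Collect_cong)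

lemma bmp_not: assumes "bmp P" shows "bmp (\<lambda>c. \<not> P c)"
proof -
  have "baire_measurable_in torus_top (topspace torus_top - {c\<in>torus. P c})"
    using assms unfolding bmp_def by (rule bm_compl)
  moreover have "topspace torus_top - {c\<in>torus. P c} = {c\<in>torus. \<not> P c}" by auto
  ultimately show ?thesis unfolding bmp_def by simp
qed

lemma bmp_ex:
  assumes "countable I" "\<And>i. i \<in> I \<Longrightarrow> bmp (P i)"
  shows "bmp (\<lambda>c. \<exists>i\<in>I. P i c)"
proof -
  have "{c \<in> torus. \<exists>i\<in>I. P i c} = \<Union>((\<lambda>i. {c \<in> torus. P i c}) ` I)" by blast
  thus ?thesis unfolding bmp_def using assms unfolding bmp_def
    by (metis (no_types, lifting) bm_countable_Union countable_image imageE)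
qed

lemma bmp_all:
  assumes "countable I" "\<And>i. i \<in> I \<Longrightarrow> bmp (P i)"
  shows "bmp (\<lambda>c. \<forall>i\<in>I. P i c)"
proof -
  have "bmp (\<lambda>c. \<not> (\<exists>i\<in>I. \<not> P i c))"
    using assms by (intro bmp_not bmp_ex) auto
  thus ?thesis by (rule bmp_cong[rotated]) blast
qed

lemma bmp_const: "bmp (\<lambda>c. b)"
proof (cases b)
  case True
  have "openin torus_top torus" using topspace_torus_top openin_topspace by metis
  then show ?thesis unfolding bmp_def using True bm_open by simp
next
  case False
  then show ?thesis unfolding bmp_def using bm_open[of torus_top "{}"] by simp
qed

lemma bmp_conj: assumes "bmp P" "bmp Q" shows "bmp (\<lambda>c. P c \<and> Q c)"
proof -
  have "bmp (\<lambda>c. \<forall>i\<in>{True,False}. (if i then P c else Q c))" proof (rule bmp_all)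
    fix i :: bool assume "i \<in> {True, False}"
    show "bmp (\<lambda>c. if i then P c else Q c)" using assms by (cases i) simp_all
  qed simp
  thus ?thesis by (rule bmp_cong[rotated]) auto
qed

lemma bmp_disj: assumes "bmp P" "bmp Q" shows "bmp (\<lambda>c. P c \<or> Q c)"
proof -
  have "bmp (\<lambda>c. \<exists>i\<in>{True,False}. (if i then P c else Q c))" proof (rule bmp_ex)
    fix i :: bool assume "i \<in> {True, False}"
    show "bmp (\<lambda>c. if i then P c else Q c)" using assms by (cases i) simp_all
  qed simp
  thus ?thesis by (rule bmp_cong[rotated]) auto
qed

lemma bmp_imp: assumes "bmp P" "bmp Q" shows "bmp (\<lambda>c. P c \<longrightarrow> Q c)"
proof -
  have "bmp (\<lambda>c. \<not> P c \<or> Q c)" by (rule bmp_disj[OF bmp_not[OF assms(1)] assms(2)])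
  thus ?thesis by (rule bmp_cong[rotated]) auto
qed

lemma bmp_transl:
  assumes "baire_measurable_in torus_top S"
  shows "bmp (\<lambda>c. tadd c v \<in> S)"
proof -
  have St: "S \<subseteq> torus" using assms bm_torus_sub by blast
  have "{c \<in> torus. tadd c v \<in> S} = (\<lambda>a. tfrac (a + - v)) ` S"
  proof
    show "{c \<in> torus. tadd c v \<in> S} \<subseteq> (\<lambda>a. tfrac (a + - v)) ` S"
    proof
      fix c assume c: "c \<in> {c \<in> torus. tadd c v \<in> S}"
      hence "c = tfrac (tadd c v + - v)" by (simp add: tadd_def tfrac_id)
      thus "c \<in> (\<lambda>a. tfrac (a + - v)) ` S" using c by blast
    qed
    show "(\<lambda>a. tfrac (a + - v)) ` S \<subseteq> {c \<in> torus. tadd c v \<in> S}"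
      using St by (auto simp: tadd_def tfrac_id)
  qed
  moreover have "baire_measurable_in torus_top ((\<lambda>a. tfrac (a + - v)) ` S)"
    by (rule bm_homeo[OF transl_homeo assms])
  ultimately show ?thesis unfolding bmp_def by (simp only:)
qed




section \<open>Matchings\<close>

lemma edgesD: "(a, b) \<in> edges x M A B \<Longrightarrow> a \<in> A \<and> b \<in> B \<and> tsub b a \<in> VM x M"
  by (simp add: edges_def)

lemma edgesI: "a \<in> A \<Longrightarrow> b \<in> B \<Longrightarrow> tsub b a \<in> VM x M \<Longrightarrow> (a, b) \<in> edges x M A B"
  by (simp add: edges_def)

lemma matching_subset: "is_matching x M A B N \<Longrightarrow> N' \<subseteq> N \<Longrightarrow> is_matching x M A B N'"
  unfolding is_matching_def by blast

lemma matching_fun: "is_matching x M A B N \<Longrightarrow> (a, b) \<in> N \<Longrightarrow> (a, b') \<in> N \<Longrightarrow> b = b'"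
  unfolding is_matching_def by blast

lemma matching_inj: "is_matching x M A B N \<Longrightarrow> (a, b) \<in> N \<Longrightarrow> (a', b) \<in> N \<Longrightarrow> a = a'"
  unfolding is_matching_def by blast

lemma perfect_split:
  assumes P: "is_perfect_matching x M A B P" and N: "N \<subseteq> P"
  shows "is_perfect_matching x M (A - Domain N) (B - Range N) (P - N)"
proof -
  have m: "is_matching x M A B P" and dP: "Domain P = A" and rP: "Range P = B"
    using P unfolding is_perfect_matching_def by auto
  have "P - N \<subseteq> edges x M (A - Domain N) (B - Range N)"
  proof
    fix e assume e: "e \<in> P - N"
    obtain a b where ab: "e = (a, b)" by fastforce
    have "(a, b) \<in> edges x M A B" using m e ab unfolding is_matching_def by blast
    moreover have "a \<notin> Domain N"
    proof
      assume "a \<in> Domain N" then obtain b' where "(a, b') \<in> N" by blast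
      hence "b' = b" using matching_fun[OF m] N e ab by blast
      thus False using \<open>(a, b') \<in> N\<close> e ab by blast
    qed
    moreover have "b \<notin> Range N"
    proof
      assume "b \<in> Range N" then obtain a' where "(a', b) \<in> N" by blast
      hence "a' = a" using matching_inj[OF m] N e ab by blast
      thus False using \<open>(a', b) \<in> N\<close> e ab by blast
    qed
    ultimately show "e \<in> edges x M (A - Domain N) (B - Range N)" using ab by (simp add: edges_def)
  qed
  moreover have "Domain (P - N) = A - Domain N"
  proof
    show "Domain (P - N) \<subseteq> A - Domain N" using calculation by (auto simp: edges_def)
    show "A - Domain N \<subseteq> Domain (P - N)" using dP by blast
  qed
  moreover have "Range (P - N) = B - Range N"
  proof
    show "Range (P - N) \<subseteq> B - Range N" using calculation(1) by (auto simp: edges_def)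
    show "B - Range N \<subseteq> Range (P - N)" using rP by blast
  qed
  ultimately show ?thesis using m unfolding is_perfect_matching_def is_matching_def by blast
qed

lemma perfect_join:
  assumes N: "is_matching x M A B N"
    and R: "is_perfect_matching x M (A - Domain N) (B - Range N) R"
  shows "is_perfect_matching x M A B (R \<union> N)"
proof -
  have Re: "R \<subseteq> edges x M (A - Domain N) (B - Range N)" and Rm: "is_matching x M (A - Domain N) (B - Range N) R"
    and dR: "Domain R = A - Domain N" and rR: "Range R = B - Range N"
    using R unfolding is_perfect_matching_def is_matching_def by auto
  have Ne: "N \<subseteq> edges x M A B" using N unfolding is_matching_def by blast
  have "R \<union> N \<subseteq> edges x M A B" using Re Ne by (auto simp: edges_def)
  moreover have "(a = a' \<longleftrightarrow> b = b')" if "(a, b) \<in> R \<union> N" "(a', b') \<in> R \<union> N" for a b a' b'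
  proof -
    have mixed: "a1 \<noteq> a2 \<and> b1 \<noteq> b2" if "(a1, b1) \<in> R" "(a2, b2) \<in> N" for a1 b1 a2 b2
    proof -
      have "(a1, b1) \<in> edges x M (A - Domain N) (B - Range N)" using Re that(1) by (rule subsetD)
      hence "a1 \<notin> Domain N" "b1 \<notin> Range N" by (auto simp: edges_def)
      thus ?thesis using that(2) by auto
    qed
    have iR: "(a1 = a2 \<longleftrightarrow> b1 = b2)" if "(a1, b1) \<in> R" "(a2, b2) \<in> R" for a1 b1 a2 b2
      using Rm that unfolding is_matching_def by blast
    have iN: "(a1 = a2 \<longleftrightarrow> b1 = b2)" if "(a1, b1) \<in> N" "(a2, b2) \<in> N" for a1 b1 a2 b2
      using N that unfolding is_matching_def by blast
    show ?thesis
    proof (cases "(a, b) \<in> R")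
      case True
      show ?thesis
      proof (cases "(a', b') \<in> R")
        case True2: True
        show ?thesis by (rule iR[OF True True2])
      next
        case False
        hence "(a', b') \<in> N" using that(2) by simp
        thus ?thesis using mixed[OF True] by blast
      qed
    next
      case False
      hence aN: "(a, b) \<in> N" using that(1) by simp
      show ?thesis
      proof (cases "(a', b') \<in> R")
        case True2: True
        thus ?thesis using mixed[OF True2 aN] by blast
      next
        case False2: False
        hence "(a', b') \<in> N" using that(2) by simp
        thus ?thesis by (rule iN[OF aN])
      qed
    qed
  qed
  moreover have "Domain (R \<union> N) = A" using dR Ne by (auto simp: edges_def)
  moreover have "Range (R \<union> N) = B" using rR Ne by (auto simp: edges_def)
  ultimately show ?thesis unfolding is_perfect_matching_def is_matching_def by blast
qed

section \<open>Compactness: finite coverings give perfect matchings\<close>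

lemma pm_compact:
  fixes x :: "'d::finite \<Rightarrow> real^'k"
  assumes A1: "A1 \<subseteq> torus" and B1: "B1 \<subseteq> torus"
    and H: "\<And>FA FB. finite FA \<Longrightarrow> finite FB \<Longrightarrow> FA \<subseteq> A1 \<Longrightarrow> FB \<subseteq> B1 \<Longrightarrow>
       \<exists>N. is_matching x M A1 B1 N \<and> FA \<subseteq> Domain N \<and> FB \<subseteq> Range N"
  shows "\<exists>P. is_perfect_matching x M A1 B1 P"
proof -
  define X where "X = product_topology (\<lambda>_::bool \<times> (real^'k). discrete_topology (VM x M)) UNIV"
  have topX: "f \<in> topspace X \<longleftrightarrow> (\<forall>i. f i \<in> VM x M)" for f
    by (simp add: X_def PiE_UNIV_domain Pi_iff del: split_paired_All)
  have cX: "compact_space X"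
    by (simp add: X_def compact_space_product_topology compact_space_discrete_topology finite_VM)
  have cl1: "closedin X {f \<in> topspace X. f i \<in> {v}}" if "v \<in> VM x M" for i v
    using closedin_continuous_map_preimage[OF continuous_map_product_projection[of i UNIV "\<lambda>_. discrete_topology (VM x M)"], of "{v}"] that
    by (simp add: X_def)
  have cl2: "closedin X {f \<in> topspace X. Q (f i) (f j)}" for Q i j
  proof -
    have eq: "{f \<in> topspace X. Q (f i) (f j)} = \<Union>((\<lambda>(v,w). {f \<in> topspace X. f i \<in> {v}} \<inter> {f \<in> topspace X. f j \<in> {w}}) ` {(v,w) \<in> VM x M \<times> VM x M. Q v w})"
    proof (rule set_eqI, rule iffI)
      fix f assume "f \<in> {f \<in> topspace X. Q (f i) (f j)}"
      hence f: "f \<in> topspace X" "Q (f i) (f j)" by auto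
      hence "f i \<in> VM x M" "f j \<in> VM x M" using topX by blast+
      thus "f \<in> \<Union>((\<lambda>(v,w). {f \<in> topspace X. f i \<in> {v}} \<inter> {f \<in> topspace X. f j \<in> {w}}) ` {(v,w) \<in> VM x M \<times> VM x M. Q v w})"
        using f by (intro UnionI[of "{g \<in> topspace X. g i \<in> {f i}} \<inter> {g \<in> topspace X. g j \<in> {f j}}"]) auto
    qed auto
    have "finite {(v,w) \<in> VM x M \<times> VM x M. Q v w}" using finite_VM
      by (metis (no_types, lifting) finite_SigmaI finite_subset mem_Sigma_iff case_prodE subsetI mem_Collect_eq)
    moreover have "\<forall>C \<in> (\<lambda>(v,w). {f \<in> topspace X. f i \<in> {v}} \<inter> {f \<in> topspace X. f j \<in> {w}}) ` {(v,w) \<in> VM x M \<times> VM x M. Q v w}. closedin X C"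
    proof
      fix C assume "C \<in> (\<lambda>(v,w). {f \<in> topspace X. f i \<in> {v}} \<inter> {f \<in> topspace X. f j \<in> {w}}) ` {(v,w) \<in> VM x M \<times> VM x M. Q v w}"
      then obtain v w where vw: "v \<in> VM x M" "w \<in> VM x M" "C = {f \<in> topspace X. f i \<in> {v}} \<inter> {f \<in> topspace X. f j \<in> {w}}"
        by auto
      show "closedin X C" unfolding vw(3) by (rule closedin_Int[OF cl1[OF vw(1)] cl1[OF vw(2)]])
    qed
    ultimately show ?thesis unfolding eq by (intro closedin_Union) auto
  qed
  define KA where "KA a = {f \<in> topspace X. a \<in> A1 \<longrightarrow> (tadd a (f (True,a)) \<in> B1 \<and> f (False, tadd a (f (True,a))) = f (True,a))}" for a
  define KB where "KB b = {f \<in> topspace X. b \<in> B1 \<longrightarrow> (tsub b (f (False,b)) \<in> A1 \<and> f (True, tsub b (f (False,b))) = f (False,b))}" for b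
  define K where "K i = (if fst i then KA (snd i) else KB (snd i))" for i
  have clA: "closedin X (KA a)" for a
  proof -
    let ?C = "\<lambda>v. {f \<in> topspace X. (\<lambda>p q. p = v \<and> (a \<in> A1 \<longrightarrow> tadd a v \<in> B1 \<and> q = v)) (f (True,a)) (f (False, tadd a v))}"
    have "KA a = \<Union>(?C ` VM x M)"
    proof (rule set_eqI, rule iffI)
      fix f assume f: "f \<in> KA a"
      hence "f \<in> topspace X" unfolding KA_def by blast
      hence "f (True, a) \<in> VM x M" using topX by blast
      moreover have "f \<in> ?C (f (True, a))" using f unfolding KA_def by simp
      ultimately show "f \<in> \<Union>(?C ` VM x M)" by blast
    next
      fix f assume "f \<in> \<Union>(?C ` VM x M)"
      then obtain v where "f \<in> ?C v" by blast
      thus "f \<in> KA a" unfolding KA_def by simp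
    qed
    moreover have "closedin X (\<Union>(?C ` VM x M))"
    proof (rule closedin_Union)
      show "finite (?C ` VM x M)" using finite_VM by (rule finite_imageI)
      fix T assume "T \<in> ?C ` VM x M"
      then obtain v where "T = ?C v" by blast
      thus "closedin X T" using cl2 by simp
    qed
    ultimately show ?thesis by simp
  qed
  have clB: "closedin X (KB b)" for b
  proof -
    let ?C = "\<lambda>v. {f \<in> topspace X. (\<lambda>p q. p = v \<and> (b \<in> B1 \<longrightarrow> tsub b v \<in> A1 \<and> q = v)) (f (False,b)) (f (True, tsub b v))}"
    have "KB b = \<Union>(?C ` VM x M)"
    proof (rule set_eqI, rule iffI)
      fix f assume f: "f \<in> KB b"
      hence "f \<in> topspace X" unfolding KB_def by blast
      hence "f (False, b) \<in> VM x M" using topX by blast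
      moreover have "f \<in> ?C (f (False, b))" using f unfolding KB_def by simp
      ultimately show "f \<in> \<Union>(?C ` VM x M)" by blast
    next
      fix f assume "f \<in> \<Union>(?C ` VM x M)"
      then obtain v where "f \<in> ?C v" by blast
      thus "f \<in> KB b" unfolding KB_def by simp
    qed
    moreover have "closedin X (\<Union>(?C ` VM x M))"
    proof (rule closedin_Union)
      show "finite (?C ` VM x M)" using finite_VM by (rule finite_imageI)
      fix T assume "T \<in> ?C ` VM x M"
      then obtain v where "T = ?C v" by blast
      thus "closedin X T" using cl2 by simp
    qed
    ultimately show ?thesis by simp
  qed
  have clK: "\<forall>C \<in> range K. closedin X C" using clA clB by (auto simp: K_def)
  have fip: "\<Inter>F \<noteq> {}" if F: "finite F" "F \<subseteq> range K" for F
  proof -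
    obtain I where I: "finite I" "F = K ` I" using finite_subset_image[OF F] by blast
    define FA where "FA = A1 \<inter> snd ` I"
    define FB where "FB = B1 \<inter> snd ` I"
    obtain N where N: "is_matching x M A1 B1 N" "FA \<subseteq> Domain N" "FB \<subseteq> Range N"
      using H[of FA FB] I(1) by (auto simp: FA_def FB_def)
    have Ne: "\<And>a b. (a, b) \<in> N \<Longrightarrow> a \<in> A1 \<and> b \<in> B1 \<and> tsub b a \<in> VM x M"
      using N(1) unfolding is_matching_def edges_def by blast
    define f where "f i = (if fst i then (if snd i \<in> Domain N then tsub (SOME b. (snd i, b) \<in> N) (snd i) else 0)
       else (if snd i \<in> Range N then tsub (snd i) (SOME a. (a, snd i) \<in> N) else 0))" for i
    have fT: "f (True, a) = tsub b a" if "(a, b) \<in> N" for a b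
    proof -
      have "(a, SOME b. (a, b) \<in> N) \<in> N" using that by (metis someI)
      hence "(SOME b. (a, b) \<in> N) = b" using matching_fun[OF N(1)] that by blast
      thus ?thesis using that unfolding f_def by auto
    qed
    have fF: "f (False, b) = tsub b a" if "(a, b) \<in> N" for a b
    proof -
      have "((SOME a. (a, b) \<in> N), b) \<in> N" using that by (metis someI)
      hence "(SOME a. (a, b) \<in> N) = a" using matching_inj[OF N(1)] that by blast
      thus ?thesis using that unfolding f_def by auto
    qed
    have ftop: "f \<in> topspace X"
      unfolding topX
    proof
      fix i :: "bool \<times> (real^'k)"
      obtain s c where i: "i = (s, c)" by (cases i)
      show "f i \<in> VM x M"
      proof (cases s)
        case True
        show ?thesis
        proof (cases "c \<in> Domain N")
          case True2: True
          then obtain b where b: "(c, b) \<in> N" by blast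
          have "f i = tsub b c" using fT[OF b] i True by simp
          thus ?thesis using Ne[OF b] by simp
        next
          case False
          thus ?thesis using i True by (simp add: f_def)
        qed
      next
        case False
        show ?thesis
        proof (cases "c \<in> Range N")
          case True2: True
          then obtain a where a: "(a, c) \<in> N" by blast
          have "f i = tsub c a" using fF[OF a] i False by simp
          thus ?thesis using Ne[OF a] by simp
        next
          case False2: False
          thus ?thesis using i False by (simp add: f_def)
        qed
      qed
    qed
    have "f \<in> K i" if "i \<in> I" for i
    proof (cases i)
      case (Pair s a)
      show ?thesis
      proof (cases s)
        case True
        have "a \<in> A1 \<longrightarrow> (tadd a (f (True,a)) \<in> B1 \<and> f (False, tadd a (f (True,a))) = f (True,a))"
        proof
          assume "a \<in> A1"
          hence "a \<in> Domain N" using N(2) that Pair unfolding FA_def by force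
          then obtain b where b: "(a, b) \<in> N" by blast
          have "tadd a (tsub b a) = b" using Ne[OF b] B1 tadd_tsub by blast
          thus "tadd a (f (True,a)) \<in> B1 \<and> f (False, tadd a (f (True,a))) = f (True,a)"
            using fT[OF b] fF[OF b] Ne[OF b] by simp
        qed
        thus ?thesis using ftop Pair True by (simp add: K_def KA_def)
      next
        case False
        have "a \<in> B1 \<longrightarrow> (tsub a (f (False,a)) \<in> A1 \<and> f (True, tsub a (f (False,a))) = f (False,a))"
        proof
          assume "a \<in> B1"
          hence "a \<in> Range N" using N(3) that Pair unfolding FB_def by force
          then obtain a' where b: "(a', a) \<in> N" by blast
          have "tsub a (tsub a a') = a'" using Ne[OF b] A1 tsub_tsub by blast
          thus "tsub a (f (False,a)) \<in> A1 \<and> f (True, tsub a (f (False,a))) = f (False,a)"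
            using fT[OF b] fF[OF b] Ne[OF b] by simp
        qed
        thus ?thesis using ftop Pair False by (simp add: K_def KB_def)
      qed
    qed
    thus ?thesis using I by blast
  qed
  have "\<Inter>(range K) \<noteq> {}"
    using cX unfolding compact_space_fip using clK fip by blast
  then obtain f where f: "\<And>i. f \<in> K i" by blast
  have fA: "a \<in> A1 \<Longrightarrow> tadd a (f (True,a)) \<in> B1 \<and> f (False, tadd a (f (True,a))) = f (True,a)" for a
    using f[of "(True, a)"] by (simp add: K_def KA_def)
  have fB: "b \<in> B1 \<Longrightarrow> tsub b (f (False,b)) \<in> A1 \<and> f (True, tsub b (f (False,b))) = f (False,b)" for b
    using f[of "(False, b)"] by (simp add: K_def KB_def)
  have ftop: "f \<in> topspace X" using f[of "(True, 0)"] by (simp add: K_def KA_def)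
  have fV: "f i \<in> VM x M" for i using ftop topX by blast
  define P where "P = {(a, tadd a (f (True,a))) | a. a \<in> A1}"
  have "P \<subseteq> edges x M A1 B1"
  proof
    fix e assume "e \<in> P"
    then obtain a where a: "a \<in> A1" "e = (a, tadd a (f (True,a)))" unfolding P_def by blast
    have "tsub (tadd a (f (True,a))) a = f (True, a)" using fV VM_torus tsub_tadd by blast
    thus "e \<in> edges x M A1 B1" using a fA[OF a(1)] fV by (simp add: edges_def)
  qed
  moreover have "(a = a' \<longleftrightarrow> b = b')" if "(a, b) \<in> P" "(a', b') \<in> P" for a b a' b'
  proof -
    have a: "a \<in> A1" "b = tadd a (f (True,a))" and a': "a' \<in> A1" "b' = tadd a' (f (True,a'))"
      using that unfolding P_def by auto
    { assume "b = b'"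
      hence "f (True, a) = f (True, a')" using fA[OF a(1)] fA[OF a'(1)] a a' by metis
      hence "tadd a (f (True, a)) = tadd a' (f (True, a))" using a a' \<open>b = b'\<close> by simp
      moreover have "a \<in> torus" "a' \<in> torus" using a(1) a'(1) A1 by blast+
      ultimately have "a = a'" using tadd_cancel by blast }
    thus ?thesis using a a' by blast
  qed
  moreover have "Domain P = A1" unfolding P_def by auto
  moreover have "Range P = B1"
  proof
    show "Range P \<subseteq> B1" using calculation(1) by (auto simp: edges_def)
    show "B1 \<subseteq> Range P"
    proof
      fix b assume b: "b \<in> B1"
      define a where "a = tsub b (f (False, b))"
      have "a \<in> A1" "f (True, a) = f (False, b)" using fB[OF b] a_def by auto
      moreover have "tadd a (f (False, b)) = b" using b B1 tadd_tsub2 a_def by blast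
      ultimately show "b \<in> Range P" unfolding P_def by force
    qed
  qed
  ultimately show ?thesis unfolding is_perfect_matching_def is_matching_def by blast
qed




lemma countable_intvec: "countable (UNIV :: (int^'d::finite) set)"
proof -
  have "(UNIV :: (int^'d) set) = range vec_lambda" by (metis surj_def vec_nth_inverse)
  moreover have "countable (range (vec_lambda :: ('d \<Rightarrow> int) \<Rightarrow> int^'d))" by (rule countable_image) simp
  ultimately show ?thesis by simp
qed

lemma countable_finite_intvec_sets: "countable {W :: (int^'d::finite) set. finite W}"
  using countable_Collect_finite_subset[OF countable_intvec] by simp

lemma matching_union:
  assumes "is_matching x M A B N1" "is_matching x M A B N2"
    and "\<And>a b a' b'. (a, b) \<in> N1 \<Longrightarrow> (a', b') \<in> N2 \<Longrightarrow> a \<noteq> a' \<and> b \<noteq> b'"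
  shows "is_matching x M A B (N1 \<union> N2)"
proof -
  have e: "N1 \<union> N2 \<subseteq> edges x M A B" using assms(1,2) unfolding is_matching_def by blast
  have "(a = a' \<longleftrightarrow> b = b')" if "(a, b) \<in> N1 \<union> N2" "(a', b') \<in> N1 \<union> N2" for a b a' b'
  proof (cases "(a, b) \<in> N1")
    case True
    show ?thesis
    proof (cases "(a', b') \<in> N1")
      case True2: True
      show ?thesis using assms(1) True True2 unfolding is_matching_def by blast
    next
      case False
      hence "(a', b') \<in> N2" using that(2) by simp
      thus ?thesis using assms(3)[OF True] by blast
    qed
  next
    case False
    hence aN: "(a, b) \<in> N2" using that(1) by simp
    show ?thesis
    proof (cases "(a', b') \<in> N1")
      case True2: True
      thus ?thesis using assms(3)[OF True2 aN] by blast
    next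
      case False2: False
      hence "(a', b') \<in> N2" using that(2) by simp
      thus ?thesis using assms(2) aN unfolding is_matching_def by blast
    qed
  qed
  thus ?thesis using e unfolding is_matching_def by blast
qed

lemma VM_lin_iff: "free_vecs x \<Longrightarrow> lin x z \<in> VM x M \<longleftrightarrow> z \<in> Zb M"
  unfolding VM_eq by (auto simp: inj_on_def)

lemma orbit_fwd:
  assumes "tsub b a = lin x z" "a = tadd c (lin x w)" "b \<in> torus"
  shows "b = tadd c (lin x (w + z))"
proof -
  have "b = tadd a (tsub b a)" using tadd_tsub[OF assms(3)] by simp
  thus ?thesis using assms by simp
qed

lemma orbit_bwd:
  assumes "tsub b a = lin x z" "b = tadd c (lin x w)" "a \<in> torus"
  shows "a = tadd c (lin x (w - z))"
proof -
  have "a = tsub b (tsub b a)" using tsub_tsub[OF assms(3)] by simp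
  thus ?thesis using assms by simp
qed

definition orbit :: "('d::finite \<Rightarrow> real^'k) \<Rightarrow> real^'k \<Rightarrow> (real^'k) set" where
  "orbit x c = {tadd c (lin x w) | w. True}"

lemma orbit_edge:
  assumes "tsub b a \<in> VM x M" "a \<in> torus" "b \<in> torus"
  shows "a \<in> orbit x c \<longleftrightarrow> b \<in> orbit x c"
proof -
  obtain z where z: "tsub b a = lin x z" using assms(1) unfolding VM_eq by blast
  show ?thesis
  proof
    assume "a \<in> orbit x c"
    then obtain w where "a = tadd c (lin x w)" unfolding orbit_def by blast
    hence "b = tadd c (lin x (w + z))" using orbit_fwd[OF z _ assms(3)] by blast
    thus "b \<in> orbit x c" unfolding orbit_def by blast
  next
    assume "b \<in> orbit x c"
    then obtain w where "b = tadd c (lin x w)" unfolding orbit_def by blast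
    hence "a = tadd c (lin x (w - z))" using orbit_bwd[OF z _ assms(2)] by blast
    thus "a \<in> orbit x c" unfolding orbit_def by blast
  qed
qed

definition NQ :: "('d::finite \<Rightarrow> real^'k) \<Rightarrow> real^'k \<Rightarrow> ((int^'d) \<times> (int^'d)) set \<Rightarrow> ((real^'k) \<times> (real^'k)) set" where
  "NQ x c Q = (\<lambda>e. (tadd c (lin x (fst e)), tadd c (lin x (fst e + snd e)))) ` Q"

definition SW :: "nat \<Rightarrow> (int^'d::finite) set \<Rightarrow> ((int^'d) \<times> (int^'d)) set" where
  "SW M W = (W \<union> {w - z | w z. w \<in> W \<and> z \<in> Zb M}) \<times> Zb M"

lemma finite_SW: "finite W \<Longrightarrow> finite (SW M W)"
proof -
  assume W: "finite W"
  have "{w - z | w z. w \<in> W \<and> z \<in> Zb M} = (\<lambda>(w, z). w - z) ` (W \<times> Zb M)" by auto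
  moreover have "finite ((\<lambda>(w, z). w - z) ` (W \<times> Zb M))"
    by (rule finite_imageI[OF finite_cartesian_product[OF W finite_Zb]])
  ultimately have f: "finite {w - z | w z. w \<in> W \<and> z \<in> Zb M}" by simp
  show ?thesis unfolding SW_def by (rule finite_cartesian_product[OF finite_UnI[OF W f] finite_Zb])
qed

definition Rc where
  "Rc x M A0 B0 p q c W Q \<longleftrightarrow>
     is_matching x M (A0 - {tadd c (lin x p)}) (B0 - {tadd c (lin x q)}) (NQ x c Q) \<and>
     (\<forall>w\<in>W. tadd c (lin x w) \<in> A0 - {tadd c (lin x p)} \<longrightarrow> tadd c (lin x w) \<in> Domain (NQ x c Q)) \<and>
     (\<forall>w\<in>W. tadd c (lin x w) \<in> B0 - {tadd c (lin x q)} \<longrightarrow> tadd c (lin x w) \<in> Range (NQ x c Q))"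

definition Cond where
  "Cond x M A0 B0 p q c \<longleftrightarrow> (\<forall>W \<in> {W. finite W}. \<exists>Q \<in> Pow (SW M W). Rc x M A0 B0 p q c W Q)"


lemma NQ_mem: "(a, b) \<in> NQ x c Q \<longleftrightarrow> (\<exists>e\<in>Q. a = tadd c (lin x (fst e)) \<and> b = tadd c (lin x (fst e + snd e)))"
  unfolding NQ_def by force

lemma Rc_part1:
  assumes free: "free_vecs x"
  shows "NQ x c Q \<subseteq> edges x M (A0 - {tadd c (lin x p)}) (B0 - {tadd c (lin x q)}) \<longleftrightarrow>
    (\<forall>e\<in>Q. tadd c (lin x (fst e)) \<in> A0 \<and> fst e \<noteq> p \<and> tadd c (lin x (fst e + snd e)) \<in> B0 \<and> fst e + snd e \<noteq> q \<and> snd e \<in> Zb M)"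
proof -
  have "(\<lambda>e. (tadd c (lin x (fst e)), tadd c (lin x (fst e + snd e)))) e \<in> edges x M (A0 - {tadd c (lin x p)}) (B0 - {tadd c (lin x q)}) \<longleftrightarrow>
    (tadd c (lin x (fst e)) \<in> A0 \<and> fst e \<noteq> p \<and> tadd c (lin x (fst e + snd e)) \<in> B0 \<and> fst e + snd e \<noteq> q \<and> snd e \<in> Zb M)" for e
    using free by (simp add: edges_def VM_lin_iff)
  thus ?thesis unfolding NQ_def image_subset_iff by simp
qed

lemma Rc_part2:
  assumes free: "free_vecs x"
  shows "(\<forall>a b a' b'. (a, b) \<in> NQ x c Q \<longrightarrow> (a', b') \<in> NQ x c Q \<longrightarrow> (a = a' \<longleftrightarrow> b = b')) \<longleftrightarrow>
    (\<forall>e\<in>Q. \<forall>e'\<in>Q. (fst e = fst e') = (fst e + snd e = fst e' + snd e'))"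
proof
  assume h: "\<forall>a b a' b'. (a, b) \<in> NQ x c Q \<longrightarrow> (a', b') \<in> NQ x c Q \<longrightarrow> (a = a' \<longleftrightarrow> b = b')"
  show "\<forall>e\<in>Q. \<forall>e'\<in>Q. (fst e = fst e') = (fst e + snd e = fst e' + snd e')"
  proof (intro ballI)
    fix e e' assume "e \<in> Q" "e' \<in> Q"
    hence "(tadd c (lin x (fst e)), tadd c (lin x (fst e + snd e))) \<in> NQ x c Q"
      "(tadd c (lin x (fst e')), tadd c (lin x (fst e' + snd e'))) \<in> NQ x c Q"
      unfolding NQ_def by auto
    hence "(tadd c (lin x (fst e)) = tadd c (lin x (fst e'))) = (tadd c (lin x (fst e + snd e)) = tadd c (lin x (fst e' + snd e')))"
      using h by blast
    thus "(fst e = fst e') = (fst e + snd e = fst e' + snd e')" using free by simp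
  qed
next
  assume h: "\<forall>e\<in>Q. \<forall>e'\<in>Q. (fst e = fst e') = (fst e + snd e = fst e' + snd e')"
  show "\<forall>a b a' b'. (a, b) \<in> NQ x c Q \<longrightarrow> (a', b') \<in> NQ x c Q \<longrightarrow> (a = a' \<longleftrightarrow> b = b')"
  proof (intro allI impI)
    fix a b a' b' assume "(a, b) \<in> NQ x c Q" "(a', b') \<in> NQ x c Q"
    then obtain e e' where e: "e \<in> Q" "a = tadd c (lin x (fst e))" "b = tadd c (lin x (fst e + snd e))"
      and e': "e' \<in> Q" "a' = tadd c (lin x (fst e'))" "b' = tadd c (lin x (fst e' + snd e'))"
      unfolding NQ_mem by blast
    have "(fst e = fst e') = (fst e + snd e = fst e' + snd e')" using h e(1) e'(1) by blast
    thus "(a = a') = (b = b')" using e e' free by simp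
  qed
qed

lemma Rc_dom:
  assumes free: "free_vecs x"
  shows "tadd c (lin x w) \<in> Domain (NQ x c Q) \<longleftrightarrow> (\<exists>e\<in>Q. fst e = w)"
proof -
  have "tadd c (lin x w) \<in> Domain (NQ x c Q) \<longleftrightarrow> (\<exists>e\<in>Q. tadd c (lin x w) = tadd c (lin x (fst e)))"
    unfolding NQ_def by force
  thus ?thesis using free by auto
qed

lemma Rc_ran:
  assumes free: "free_vecs x"
  shows "tadd c (lin x w) \<in> Range (NQ x c Q) \<longleftrightarrow> (\<exists>e\<in>Q. fst e + snd e = w)"
proof -
  have "tadd c (lin x w) \<in> Range (NQ x c Q) \<longleftrightarrow> (\<exists>e\<in>Q. tadd c (lin x w) = tadd c (lin x (fst e + snd e)))"
    unfolding NQ_def by force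
  thus ?thesis using free by auto
qed

lemma Rc_iff:
  assumes free: "free_vecs x"
  shows "Rc x M A0 B0 p q c W Q \<longleftrightarrow>
    ((\<forall>e\<in>Q. tadd c (lin x (fst e)) \<in> A0 \<and> fst e \<noteq> p \<and> tadd c (lin x (fst e + snd e)) \<in> B0 \<and> fst e + snd e \<noteq> q \<and> snd e \<in> Zb M) \<and>
     (\<forall>e\<in>Q. \<forall>e'\<in>Q. (fst e = fst e') = (fst e + snd e = fst e' + snd e')) \<and>
     (\<forall>w\<in>W. tadd c (lin x w) \<in> A0 \<and> w \<noteq> p \<longrightarrow> (\<exists>e\<in>Q. fst e = w)) \<and>
     (\<forall>w\<in>W. tadd c (lin x w) \<in> B0 \<and> w \<noteq> q \<longrightarrow> (\<exists>e\<in>Q. fst e + snd e = w)))"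
proof -
  have m: "is_matching x M (A0 - {tadd c (lin x p)}) (B0 - {tadd c (lin x q)}) (NQ x c Q) \<longleftrightarrow>
     ((\<forall>e\<in>Q. tadd c (lin x (fst e)) \<in> A0 \<and> fst e \<noteq> p \<and> tadd c (lin x (fst e + snd e)) \<in> B0 \<and> fst e + snd e \<noteq> q \<and> snd e \<in> Zb M) \<and>
     (\<forall>e\<in>Q. \<forall>e'\<in>Q. (fst e = fst e') = (fst e + snd e = fst e' + snd e')))"
    unfolding is_matching_def Rc_part1[OF free] Rc_part2[OF free] by (rule refl)
  have d: "(\<forall>w\<in>W. tadd c (lin x w) \<in> A0 - {tadd c (lin x p)} \<longrightarrow> tadd c (lin x w) \<in> Domain (NQ x c Q)) \<longleftrightarrow>
      (\<forall>w\<in>W. tadd c (lin x w) \<in> A0 \<and> w \<noteq> p \<longrightarrow> (\<exists>e\<in>Q. fst e = w))"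
    using free by (simp add: Rc_dom)
  have r: "(\<forall>w\<in>W. tadd c (lin x w) \<in> B0 - {tadd c (lin x q)} \<longrightarrow> tadd c (lin x w) \<in> Range (NQ x c Q)) \<longleftrightarrow>
      (\<forall>w\<in>W. tadd c (lin x w) \<in> B0 \<and> w \<noteq> q \<longrightarrow> (\<exists>e\<in>Q. fst e + snd e = w))"
    using free by (simp add: Rc_ran)
  show ?thesis unfolding Rc_def m d r by (simp only: conj_assoc)
qed

lemma bmp_Rc:
  assumes free: "free_vecs x" and A0: "baire_measurable_in torus_top A0" and B0: "baire_measurable_in torus_top B0"
    and Q: "finite Q" and W: "finite W"
  shows "bmp (\<lambda>c. Rc x M A0 B0 p q c W Q)"
proof -
  have cQ: "countable Q" using Q by (rule countable_finite)
  have cW: "countable W" using W by (rule countable_finite)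
  have "bmp (\<lambda>c. ((\<forall>e\<in>Q. tadd c (lin x (fst e)) \<in> A0 \<and> fst e \<noteq> p \<and> tadd c (lin x (fst e + snd e)) \<in> B0 \<and> fst e + snd e \<noteq> q \<and> snd e \<in> Zb M) \<and>
     (\<forall>e\<in>Q. \<forall>e'\<in>Q. (fst e = fst e') = (fst e + snd e = fst e' + snd e')) \<and>
     (\<forall>w\<in>W. tadd c (lin x w) \<in> A0 \<and> w \<noteq> p \<longrightarrow> (\<exists>e\<in>Q. fst e = w)) \<and>
     (\<forall>w\<in>W. tadd c (lin x w) \<in> B0 \<and> w \<noteq> q \<longrightarrow> (\<exists>e\<in>Q. fst e + snd e = w))))"
    by (intro bmp_conj bmp_all bmp_imp bmp_transl bmp_const cQ cW A0 B0)
  thus ?thesis by (rule bmp_cong[rotated]) (simp only: Rc_iff[OF free])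
qed

lemma bmp_Cond:
  assumes free: "free_vecs x" and A0: "baire_measurable_in torus_top A0" and B0: "baire_measurable_in torus_top B0"
  shows "bmp (Cond x M A0 B0 p q)"
proof -
  have "bmp (\<lambda>c. \<forall>W \<in> {W. finite W}. \<exists>Q \<in> Pow (SW M W). Rc x M A0 B0 p q c W Q)"
  proof (rule bmp_all[OF countable_finite_intvec_sets])
    fix W :: "(int^'a) set" assume "W \<in> {W. finite W}"
    hence W: "finite W" by simp
    show "bmp (\<lambda>c. \<exists>Q \<in> Pow (SW M W). Rc x M A0 B0 p q c W Q)"
    proof (rule bmp_ex)
      show "countable (Pow (SW M W))" using finite_SW[OF W] by (simp add: countable_finite)
      fix Q assume "Q \<in> Pow (SW M W)"
      hence "finite Q" using finite_SW[OF W] finite_subset by blast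
      thus "bmp (\<lambda>c. Rc x M A0 B0 p q c W Q)" using bmp_Rc[OF free A0 B0 _ W] by blast
    qed
  qed
  thus ?thesis by (rule bmp_cong[rotated]) (simp add: Cond_def)
qed


lemma perfect_edge:
  assumes "is_perfect_matching x M A B P" "(a, b) \<in> P"
  shows "a \<in> A \<and> b \<in> B \<and> tsub b a \<in> VM x M"
  using assms unfolding is_perfect_matching_def is_matching_def edges_def by blast

lemma VM_obtain:
  assumes "v \<in> VM x M" obtains z where "z \<in> Zb M" "v = lin x z"
  using assms unfolding VM_eq by blast

lemma Cond_char:
  fixes x :: "'d::finite \<Rightarrow> real^'k"
  assumes free: "free_vecs x" and A0t: "A0 \<subseteq> torus" and B0t: "B0 \<subseteq> torus"
    and P0: "is_perfect_matching x M A0 B0 P0" and c: "c \<in> torus"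
  shows "(\<exists>P. is_perfect_matching x M (A0 - {tadd c (lin x p)}) (B0 - {tadd c (lin x q)}) P) \<longleftrightarrow> Cond x M A0 B0 p q c"
proof
  assume "\<exists>P. is_perfect_matching x M (A0 - {tadd c (lin x p)}) (B0 - {tadd c (lin x q)}) P"
  then obtain P1 where P1: "is_perfect_matching x M (A0 - {tadd c (lin x p)}) (B0 - {tadd c (lin x q)}) P1" by blast
  have P1m: "is_matching x M (A0 - {tadd c (lin x p)}) (B0 - {tadd c (lin x q)}) P1"
    and P1d: "Domain P1 = A0 - {tadd c (lin x p)}" and P1r: "Range P1 = B0 - {tadd c (lin x q)}"
    using P1 unfolding is_perfect_matching_def by auto
  show "Cond x M A0 B0 p q c" unfolding Cond_def
  proof
    fix W :: "(int^'d) set" assume "W \<in> {W. finite W}"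
    define Q where "Q = {e \<in> SW M W. (tadd c (lin x (fst e)), tadd c (lin x (fst e + snd e))) \<in> P1}"
    have QS: "Q \<in> Pow (SW M W)" unfolding Q_def by blast
    have NQsub: "NQ x c Q \<subseteq> P1" unfolding NQ_def Q_def by auto
    have m: "is_matching x M (A0 - {tadd c (lin x p)}) (B0 - {tadd c (lin x q)}) (NQ x c Q)"
      by (rule matching_subset[OF P1m NQsub])
    have d: "\<forall>w\<in>W. tadd c (lin x w) \<in> A0 - {tadd c (lin x p)} \<longrightarrow> tadd c (lin x w) \<in> Domain (NQ x c Q)"
    proof (intro ballI impI)
      fix w assume w: "w \<in> W" and a: "tadd c (lin x w) \<in> A0 - {tadd c (lin x p)}"
      then obtain b where ab: "(tadd c (lin x w), b) \<in> P1" using P1d by blast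
      have e: "b \<in> B0 - {tadd c (lin x q)}" "tsub b (tadd c (lin x w)) \<in> VM x M"
        using perfect_edge[OF P1 ab] by auto
      obtain z where z: "z \<in> Zb M" "tsub b (tadd c (lin x w)) = lin x z" using e(2) by (rule VM_obtain)
      have bt: "b \<in> torus" using e(1) B0t by blast
      have b: "b = tadd c (lin x (w + z))" by (rule orbit_fwd[OF z(2) refl bt])
      have "(w, z) \<in> SW M W" unfolding SW_def using w z(1) by blast
      hence "(w, z) \<in> Q" unfolding Q_def using ab b by simp
      thus "tadd c (lin x w) \<in> Domain (NQ x c Q)" unfolding Rc_dom[OF free] by force
    qed
    have r: "\<forall>w\<in>W. tadd c (lin x w) \<in> B0 - {tadd c (lin x q)} \<longrightarrow> tadd c (lin x w) \<in> Range (NQ x c Q)"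
    proof (intro ballI impI)
      fix w assume w: "w \<in> W" and b: "tadd c (lin x w) \<in> B0 - {tadd c (lin x q)}"
      then obtain a where ab: "(a, tadd c (lin x w)) \<in> P1" using P1r by blast
      have e: "a \<in> A0 - {tadd c (lin x p)}" "tsub (tadd c (lin x w)) a \<in> VM x M"
        using perfect_edge[OF P1 ab] by auto
      obtain z where z: "z \<in> Zb M" "tsub (tadd c (lin x w)) a = lin x z" using e(2) by (rule VM_obtain)
      have at: "a \<in> torus" using e(1) A0t by blast
      have a: "a = tadd c (lin x (w - z))" by (rule orbit_bwd[OF z(2) refl at])
      have "(w - z, z) \<in> SW M W" unfolding SW_def using w z(1) by blast
      hence "(w - z, z) \<in> Q" unfolding Q_def using ab a by simp
      moreover have "fst (w - z, z) + snd (w - z, z) = w" by simp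
      ultimately show "tadd c (lin x w) \<in> Range (NQ x c Q)" unfolding Rc_ran[OF free] by blast
    qed
    have "Rc x M A0 B0 p q c W Q" unfolding Rc_def using m d r by blast
    thus "\<exists>Q\<in>Pow (SW M W). Rc x M A0 B0 p q c W Q" using QS by blast
  qed
next
  assume C: "Cond x M A0 B0 p q c"
  let ?a1 = "tadd c (lin x p)" and ?b1 = "tadd c (lin x q)"
  have P0m: "is_matching x M A0 B0 P0" and P0d: "Domain P0 = A0" and P0r: "Range P0 = B0"
    using P0 unfolding is_perfect_matching_def by auto
  show "\<exists>P. is_perfect_matching x M (A0 - {?a1}) (B0 - {?b1}) P"
  proof (rule pm_compact)
    show "A0 - {?a1} \<subseteq> torus" using A0t by blast
    show "B0 - {?b1} \<subseteq> torus" using B0t by blast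
    fix FA FB assume FA: "finite FA" "FA \<subseteq> A0 - {?a1}" and FB: "finite FB" "FB \<subseteq> B0 - {?b1}"
    define W where "W = (\<lambda>w. tadd c (lin x w)) -` (FA \<union> FB)"
    have inj: "inj (\<lambda>w. tadd c (lin x w))" using free by (simp add: inj_on_def)
    have Wf: "finite W" unfolding W_def using FA(1) FB(1) inj by (intro finite_vimageI) simp_all
    obtain Q where Q: "Q \<in> Pow (SW M W)" "Rc x M A0 B0 p q c W Q" using C Wf unfolding Cond_def by blast
    have N1m: "is_matching x M (A0 - {?a1}) (B0 - {?b1}) (NQ x c Q)"
      and N1d: "\<forall>w\<in>W. tadd c (lin x w) \<in> A0 - {?a1} \<longrightarrow> tadd c (lin x w) \<in> Domain (NQ x c Q)"
      and N1r: "\<forall>w\<in>W. tadd c (lin x w) \<in> B0 - {?b1} \<longrightarrow> tadd c (lin x w) \<in> Range (NQ x c Q)"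
      using Q(2) unfolding Rc_def by blast+
    define N2 where "N2 = {e \<in> P0. fst e \<notin> orbit x c}"
    have orb: "tadd c (lin x w) \<in> orbit x c" for w unfolding orbit_def by blast
    have N2e: "a \<notin> orbit x c \<and> b \<notin> orbit x c \<and> a \<in> A0 \<and> b \<in> B0 \<and> tsub b a \<in> VM x M" if "(a, b) \<in> N2" for a b
    proof -
      have ab: "(a, b) \<in> P0" "a \<notin> orbit x c" using that unfolding N2_def by auto
      have e: "a \<in> A0" "b \<in> B0" "tsub b a \<in> VM x M" using perfect_edge[OF P0 ab(1)] by auto
      have "b \<notin> orbit x c" using orbit_edge[OF e(3)] ab(2) e(1,2) A0t B0t by blast
      thus ?thesis using ab e by blast
    qed
    have N2m: "is_matching x M (A0 - {?a1}) (B0 - {?b1}) N2"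
    proof -
      have "N2 \<subseteq> edges x M (A0 - {?a1}) (B0 - {?b1})"
      proof
        fix e assume "e \<in> N2"
        then obtain a b where ab: "e = (a, b)" "(a, b) \<in> N2" by (cases e) blast
        have "a \<noteq> ?a1" "b \<noteq> ?b1" using N2e[OF ab(2)] orb by metis+
        thus "e \<in> edges x M (A0 - {?a1}) (B0 - {?b1})" using N2e[OF ab(2)] ab(1) by (simp add: edges_def)
      qed
      moreover have "N2 \<subseteq> P0" unfolding N2_def by blast
      ultimately show ?thesis using P0m unfolding is_matching_def by blast
    qed
    have N1e: "a \<in> orbit x c \<and> b \<in> orbit x c" if "(a, b) \<in> NQ x c Q" for a b
      using that unfolding NQ_mem using orb by blast
    have Nm: "is_matching x M (A0 - {?a1}) (B0 - {?b1}) (NQ x c Q \<union> N2)"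
    proof (rule matching_union[OF N1m N2m])
      fix a b a' b' assume "(a, b) \<in> NQ x c Q" "(a', b') \<in> N2"
      thus "a \<noteq> a' \<and> b \<noteq> b'" using N1e N2e by blast
    qed
    have dom: "FA \<subseteq> Domain (NQ x c Q \<union> N2)"
    proof
      fix a assume a: "a \<in> FA"
      show "a \<in> Domain (NQ x c Q \<union> N2)"
      proof (cases "a \<in> orbit x c")
        case True
        then obtain w where w: "a = tadd c (lin x w)" unfolding orbit_def by blast
        have "w \<in> W" unfolding W_def using a w by simp
        hence "a \<in> Domain (NQ x c Q)" using N1d FA(2) a w by blast
        thus ?thesis by blast
      next
        case False
        have "a \<in> Domain P0" using P0d a FA(2) by blast
        then obtain b where "(a, b) \<in> P0" by blast
        hence "(a, b) \<in> N2" unfolding N2_def using False by simp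
        thus ?thesis by blast
      qed
    qed
    have ran: "FB \<subseteq> Range (NQ x c Q \<union> N2)"
    proof
      fix b assume b: "b \<in> FB"
      show "b \<in> Range (NQ x c Q \<union> N2)"
      proof (cases "b \<in> orbit x c")
        case True
        then obtain w where w: "b = tadd c (lin x w)" unfolding orbit_def by blast
        have "w \<in> W" unfolding W_def using b w by simp
        hence "b \<in> Range (NQ x c Q)" using N1r FB(2) b w by blast
        thus ?thesis by blast
      next
        case False
        have "b \<in> Range P0" using P0r b FB(2) by blast
        then obtain a where ab: "(a, b) \<in> P0" by blast
        have e: "a \<in> A0" "b \<in> B0" "tsub b a \<in> VM x M" using perfect_edge[OF P0 ab] by auto
        have "a \<notin> orbit x c" using orbit_edge[OF e(3)] False e(1,2) A0t B0t by blast
        hence "(a, b) \<in> N2" unfolding N2_def using ab by simp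
        thus ?thesis by blast
      qed
    qed
    show "\<exists>N. is_matching x M (A0 - {?a1}) (B0 - {?b1}) N \<and> FA \<subseteq> Domain N \<and> FB \<subseteq> Range N"
      using Nm dom ran by blast
  qed
qed




lemma tadd_zero[simp]: "c \<in> torus \<Longrightarrow> tadd c 0 = c"
  by (simp add: tadd_def tfrac_id)

lemma bmp_PM:
  fixes x :: "'d::finite \<Rightarrow> real^'k"
  assumes free: "free_vecs x" and A0: "baire_measurable_in torus_top A0" and B0: "baire_measurable_in torus_top B0"
    and P0: "is_perfect_matching x M A0 B0 P0"
  shows "bmp (\<lambda>c. \<exists>P. is_perfect_matching x M (A0 - {tadd c (lin x p)}) (B0 - {tadd c (lin x q)}) P)"
proof -
  have A0t: "A0 \<subseteq> torus" and B0t: "B0 \<subseteq> torus" using A0 B0 by (auto dest: bm_torus_sub)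
  show ?thesis
    by (rule bmp_cong[OF _ bmp_Cond[OF free A0 B0, of M p q]]) (rule Cond_char[OF free A0t B0t P0, symmetric])
qed

lemma linf_dist_le_iff: "linf_dist n m \<le> K \<longleftrightarrow> (\<forall>j. \<bar>n $ j - m $ j\<bar> \<le> K)"
  unfolding linf_dist_def by (subst Max_le_iff) auto

lemma linf_dist_gt_iff: "K < linf_dist n m \<longleftrightarrow> (\<exists>j. K < \<bar>n $ j - m $ j\<bar>)"
  unfolding linf_dist_def by (subst Max_gr_iff) auto

lemma linf_dist_Zb: "z \<in> Zb M \<Longrightarrow> linf_dist n (n + z) \<le> int M"
  unfolding linf_dist_le_iff Zb_def by simp

lemma linf_dist_sym: "linf_dist n m = linf_dist m n"
  unfolding linf_dist_def by (simp add: abs_minus_commute)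

lemma linf_dist_tri:
  assumes "linf_dist n s \<le> K1" "linf_dist t m \<le> K2" "K1 + K2 + D < linf_dist n m"
  shows "D < linf_dist s t"
proof -
  obtain j where j: "K1 + K2 + D < \<bar>n $ j - m $ j\<bar>" using assms(3) linf_dist_gt_iff by blast
  have "\<bar>n $ j - s $ j\<bar> \<le> K1" "\<bar>t $ j - m $ j\<bar> \<le> K2" using assms(1,2) linf_dist_le_iff by blast+
  hence "D < \<bar>s $ j - t $ j\<bar>" using j by linarith
  thus ?thesis using linf_dist_gt_iff by blast
qed

section \<open>Reversal\<close>

lemma tsub_swap_VM:
  assumes "tsub b a \<in> VM x M" shows "tsub a b \<in> VM x M"
proof -
  obtain z where z: "z \<in> Zb M" "tsub b a = lin x z" using assms by (rule VM_obtain)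
  have "tsub a b = lin x (- z)" by (rule tsub_swap[OF z(2)])
  thus ?thesis using Zb_neg[OF z(1)] unfolding VM_eq by blast
qed

lemma edges_converse: "(a, b) \<in> edges x M A B \<longleftrightarrow> (b, a) \<in> edges x M B A"
  unfolding edges_def using tsub_swap_VM by blast

lemma matching_converse: "is_matching x M A B N \<Longrightarrow> is_matching x M B A (converse N)"
  unfolding is_matching_def using edges_converse by fastforce

lemma perfect_converse: "is_perfect_matching x M A B N \<Longrightarrow> is_perfect_matching x M B A (converse N)"
  unfolding is_perfect_matching_def using matching_converse by auto

lemma extendable_converse: "extendable x M A B N \<Longrightarrow> extendable x M B A (converse N)"
proof -
  assume "extendable x M A B N"
  then obtain P where "is_matching x M A B N" "is_perfect_matching x M A B P" "N \<subseteq> P"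
    unfolding extendable_def by blast
  thus ?thesis unfolding extendable_def using matching_converse perfect_converse
    by (metis converse_mono)
qed

lemma baire_matching_converse:
  fixes x :: "'d::finite \<Rightarrow> real^'k"
  assumes free: "free_vecs x" and bm: "baire_matching x M N" and Nm: "is_matching x M A B N"
    and At: "A \<subseteq> torus" and Bt: "B \<subseteq> torus"
  shows "baire_matching x M (converse N)"
  unfolding baire_matching_def
proof
  fix v assume "v \<in> VM x M"
  then obtain w where w: "w \<in> Zb M" "v = lin x w" by (rule VM_obtain)
  have Ne: "a \<in> A \<and> b \<in> B \<and> tsub b a \<in> VM x M" if "(a, b) \<in> N" for a b
    using Nm that unfolding is_matching_def edges_def by blast
  let ?D = "{a. \<exists>b. (a, b) \<in> N \<and> tsub b a = lin x (- w)}"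
  have D: "baire_measurable_in torus_top ?D"
    using bm Zb_neg[OF w(1)] unfolding baire_matching_def VM_eq by blast
  have S: "{a. \<exists>b. (a, b) \<in> converse N \<and> tsub b a = v} \<subseteq> torus" using Ne Bt by blast
  have "bmp (\<lambda>c. tadd c (lin x w) \<in> ?D)" by (rule bmp_transl[OF D])
  moreover have "tadd c (lin x w) \<in> ?D \<longleftrightarrow> c \<in> {a. \<exists>b. (a, b) \<in> converse N \<and> tsub b a = v}" if c: "c \<in> torus" for c
  proof
    assume "tadd c (lin x w) \<in> ?D"
    then obtain b where b: "(tadd c (lin x w), b) \<in> N" "tsub b (tadd c (lin x w)) = lin x (- w)" by blast
    have "b = tadd c (lin x (w + - w))" by (rule orbit_fwd[OF b(2) refl]) (use Ne[OF b(1)] Bt in blast)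
    hence "b = c" using c by simp
    moreover have "tsub (tadd c (lin x w)) c = v" using tsub_tadd[of "lin x w" c] w(2) by simp
    ultimately show "c \<in> {a. \<exists>b. (a, b) \<in> converse N \<and> tsub b a = v}" using b(1) by blast
  next
    assume "c \<in> {a. \<exists>b. (a, b) \<in> converse N \<and> tsub b a = v}"
    then obtain a where a: "(a, c) \<in> N" "tsub a c = lin x w" using w(2) by blast
    have at: "a \<in> torus" using Ne[OF a(1)] At by blast
    have "tsub c a = lin x (- w)" using tsub_swap[OF a(2)] by simp
    moreover have "a = tadd c (lin x w)" using tadd_tsub[OF at, of c] a(2) by simp
    ultimately show "tadd c (lin x w) \<in> ?D" using a(1) by blast
  qed
  ultimately have "bmp (\<lambda>c. c \<in> {a. \<exists>b. (a, b) \<in> converse N \<and> tsub b a = v})"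
    by (rule bmp_cong[rotated])
  thus "baire_measurable_in torus_top {a. \<exists>b. (a, b) \<in> converse N \<and> tsub b a = v}"
    by (rule bmp_bm[OF _ S])
qed

lemma edge_section_converse: "edge_section x (converse N) u = (\<lambda>(n, m). (m, n)) ` edge_section x N u"
  unfolding edge_section_def by force




lemma ext_insert:
  assumes M0m: "is_matching x M A B M0" and a: "a \<in> A" "a \<notin> Domain M0" and b: "b \<in> B" "b \<notin> Range M0"
    and ab: "tsub b a \<in> VM x M"
    and R: "is_perfect_matching x M ((A - Domain M0) - {a}) ((B - Range M0) - {b}) R"
  shows "extendable x M A B (insert (a, b) M0)"
proof -
  have m1: "is_matching x M A B {(a, b)}" unfolding is_matching_def edges_def using a b ab by blast
  have "is_matching x M A B ({(a, b)} \<union> M0)"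
  proof (rule matching_union[OF m1 M0m])
    fix a1 b1 a2 b2 assume "(a1, b1) \<in> {(a, b)}" "(a2, b2) \<in> M0"
    thus "a1 \<noteq> a2 \<and> b1 \<noteq> b2" using a(2) b(2) by blast
  qed
  hence Nm: "is_matching x M A B (insert (a, b) M0)" by simp
  have "A - Domain (insert (a, b) M0) = (A - Domain M0) - {a}" "B - Range (insert (a, b) M0) = (B - Range M0) - {b}"
    by auto
  hence "is_perfect_matching x M (A - Domain (insert (a, b) M0)) (B - Range (insert (a, b) M0)) R" using R by simp
  hence "is_perfect_matching x M A B (R \<union> insert (a, b) M0)" by (rule perfect_join[OF Nm])
  thus ?thesis unfolding extendable_def using Nm by blast
qed

lemma A_case:
  fixes x :: "'d::finite \<Rightarrow> real^'k"
    and M r :: nat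
    and A B Ai :: "(real^'k) set"
    and M0 :: "((real^'k) \<times> (real^'k)) set"
  assumes free: "free_vecs x"
    and A_bm: "baire_measurable_in torus_top A"
    and B_bm: "baire_measurable_in torus_top B"
    and Ai_sub: "Ai \<subseteq> A"
    and Ai_bm: "baire_measurable_in torus_top Ai"
    and sparse: "sparse x (r + 4 * M) Ai"
    and M0_bm: "baire_matching x M M0"
    and M0_ext: "extendable x M A B M0"
  shows "\<exists>M1. M0 \<subseteq> M1 \<and> is_matching x M A B M1 \<and> baire_matching x M M1
    \<and> Ai \<subseteq> Domain M1
    \<and> (\<forall>u\<in>torus. \<forall>p\<in>edge_section x (M1 - M0) u. \<forall>q\<in>edge_section x (M1 - M0) u.
          p \<noteq> q \<longrightarrow> (\<forall>s\<in>{fst p, snd p}. \<forall>t\<in>{fst q, snd q}. linf_dist s t > int (r + 2 * M)))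
    \<and> (\<forall>e\<in>M1 - M0. extendable x M A B (insert e M0))"
proof -
  obtain P where P: "is_perfect_matching x M A B P" and M0P: "M0 \<subseteq> P" and M0m: "is_matching x M A B M0"
    using M0_ext unfolding extendable_def by blast
  have At: "A \<subseteq> torus" and Bt: "B \<subseteq> torus" using A_bm B_bm by (auto dest: bm_torus_sub)
  define A0 where "A0 = A - Domain M0"
  define B0 where "B0 = B - Range M0"
  have P0: "is_perfect_matching x M A0 B0 (P - M0)" unfolding A0_def B0_def by (rule perfect_split[OF P M0P])
  have M0e: "a \<in> A \<and> b \<in> B \<and> tsub b a \<in> VM x M" if "(a, b) \<in> M0" for a b
    using M0m that unfolding is_matching_def edges_def by blast
  define D where "D v = {a. \<exists>b. (a, b) \<in> M0 \<and> tsub b a = v}" for v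
  have Dbm: "baire_measurable_in torus_top (D v)" if "v \<in> VM x M" for v
    using M0_bm that unfolding baire_matching_def D_def by blast
  have cVM: "countable (VM x M)" using finite_VM by (rule countable_finite)
  have cZb: "countable (Zb M :: (int^'d) set)" using finite_Zb by (rule countable_finite)
  have bmp_dom: "bmp (\<lambda>c. c \<in> Domain M0)"
  proof -
    have "bmp (\<lambda>c. \<exists>v\<in>VM x M. c \<in> D v)" by (rule bmp_ex[OF cVM bmp_mem[OF Dbm]])
    moreover have "(\<exists>v\<in>VM x M. c \<in> D v) \<longleftrightarrow> c \<in> Domain M0" for c
      unfolding D_def using M0e by blast
    ultimately show ?thesis by (rule bmp_cong[rotated])
  qed
  have bmp_ran: "bmp (\<lambda>c. c \<in> Range M0)"
  proof -
    have "bmp (\<lambda>c. \<exists>z\<in>Zb M. tadd c (lin x (- z)) \<in> D (lin x z))"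
    proof (rule bmp_ex[OF cZb])
      fix z :: "int^'d" assume "z \<in> Zb M"
      hence "lin x z \<in> VM x M" unfolding VM_eq by blast
      thus "bmp (\<lambda>c. tadd c (lin x (- z)) \<in> D (lin x z))" by (rule bmp_transl[OF Dbm])
    qed
    moreover have "(\<exists>z\<in>Zb M. tadd c (lin x (- z)) \<in> D (lin x z)) \<longleftrightarrow> c \<in> Range M0" if c: "c \<in> torus" for c
    proof
      assume "\<exists>z\<in>Zb M. tadd c (lin x (- z)) \<in> D (lin x z)"
      then obtain z b where zb: "(tadd c (lin x (- z)), b) \<in> M0" "tsub b (tadd c (lin x (- z))) = lin x z"
        unfolding D_def by blast
      have "b = tadd c (lin x (- z + z))" by (rule orbit_fwd[OF zb(2) refl]) (use M0e[OF zb(1)] Bt in blast)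
      hence "b = c" using c by simp
      thus "c \<in> Range M0" using zb(1) by blast
    next
      assume "c \<in> Range M0"
      then obtain a where a: "(a, c) \<in> M0" by blast
      obtain z where z: "z \<in> Zb M" "tsub c a = lin x z" using M0e[OF a] by (blast elim: VM_obtain)
      have "a = tadd c (lin x (0 - z))"
        by (rule orbit_bwd[OF z(2)]) (use c M0e[OF a] At in auto)
      hence "tadd c (lin x (- z)) \<in> D (lin x z)" unfolding D_def using a z(2) by auto
      thus "\<exists>z\<in>Zb M. tadd c (lin x (- z)) \<in> D (lin x z)" using z(1) by blast
    qed
    ultimately show ?thesis by (rule bmp_cong[rotated])
  qed
  have A0bm: "baire_measurable_in torus_top A0"
  proof (rule bmp_bm)
    have "bmp (\<lambda>c. c \<in> A \<and> \<not> c \<in> Domain M0)" by (rule bmp_conj[OF bmp_mem[OF A_bm] bmp_not[OF bmp_dom]])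
    thus "bmp (\<lambda>c. c \<in> A0)" by (rule bmp_cong[rotated]) (simp add: A0_def)
    show "A0 \<subseteq> torus" using At A0_def by blast
  qed
  have B0bm: "baire_measurable_in torus_top B0"
  proof (rule bmp_bm)
    have "bmp (\<lambda>c. c \<in> B \<and> \<not> c \<in> Range M0)" by (rule bmp_conj[OF bmp_mem[OF B_bm] bmp_not[OF bmp_ran]])
    thus "bmp (\<lambda>c. c \<in> B0)" by (rule bmp_cong[rotated]) (simp add: B0_def)
    show "B0 \<subseteq> torus" using Bt B0_def by blast
  qed
  define G where "G z c \<longleftrightarrow> tadd c (lin x z) \<in> B0 \<and> (\<exists>R. is_perfect_matching x M (A0 - {c}) (B0 - {tadd c (lin x z)}) R)" for z c
  have bmpG: "bmp (G z)" for z
  proof -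
    have "bmp (\<lambda>c. \<exists>R. is_perfect_matching x M (A0 - {tadd c (lin x 0)}) (B0 - {tadd c (lin x z)}) R)"
      by (rule bmp_PM[OF free A0bm B0bm P0])
    hence "bmp (\<lambda>c. \<exists>R. is_perfect_matching x M (A0 - {c}) (B0 - {tadd c (lin x z)}) R)"
      by (rule bmp_cong[rotated]) simp
    hence "bmp (\<lambda>c. tadd c (lin x z) \<in> B0 \<and> (\<exists>R. is_perfect_matching x M (A0 - {c}) (B0 - {tadd c (lin x z)}) R))"
      by (rule bmp_conj[OF bmp_transl[OF B0bm]])
    thus ?thesis unfolding G_def .
  qed
  obtain zs :: "(int^'d) list" where zs: "set zs = Zb M" "distinct zs" using finite_distinct_list[OF finite_Zb] by blast
  have zsZ: "zs ! i \<in> Zb M" if "i < length zs" for i using zs(1) that nth_mem by blast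
  define Ai' where "Ai' = Ai - Domain M0"
  define T where "T i = {a \<in> Ai'. G (zs ! i) a \<and> (\<forall>j<i. \<not> G (zs ! j) a)}" for i
  define New where "New = {(a, tadd a (lin x (zs ! i))) | a i. i < length zs \<and> a \<in> T i}"
  define M1 where "M1 = M0 \<union> New"
  have T_unique: "i = j" if "a \<in> T i" "a \<in> T j" for a i j
  proof (rule ccontr)
    assume "i \<noteq> j"
    hence "i < j \<or> j < i" by arith
    thus False using that unfolding T_def by blast
  qed
  have TAi: "a \<in> Ai \<and> a \<in> A0 \<and> a \<in> torus" if "a \<in> T i" for a i
    using that Ai_sub At unfolding T_def Ai'_def A0_def by blast
  have exG: "\<exists>z\<in>Zb M. G z a" if a: "a \<in> Ai'" for a
  proof -
    have aA: "a \<in> A" "a \<notin> Domain M0" "a \<in> torus" using a Ai_sub At unfolding Ai'_def by blast+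
    have "a \<in> Domain P" using P aA(1) unfolding is_perfect_matching_def by blast
    then obtain b where ab: "(a, b) \<in> P" by blast
    have e: "a \<in> A" "b \<in> B" "tsub b a \<in> VM x M" using perfect_edge[OF P ab] by auto
    obtain z where z: "z \<in> Zb M" "tsub b a = lin x z" using e(3) by (rule VM_obtain)
    have "b = tadd a (lin x (0 + z))" by (rule orbit_fwd[OF z(2)]) (use aA(3) e(2) Bt in auto)
    hence b: "b = tadd a (lin x z)" by simp
    have bR: "b \<notin> Range M0"
    proof
      assume "b \<in> Range M0"
      then obtain a' where "(a', b) \<in> M0" by blast
      hence "a' = a" using matching_inj[of x M A B P a' b a] P M0P ab unfolding is_perfect_matching_def by blast
      thus False using \<open>(a', b) \<in> M0\<close> aA(2) by blast
    qed
    have sub: "insert (a, b) M0 \<subseteq> P" using ab M0P by blast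
    have "is_perfect_matching x M (A - Domain (insert (a, b) M0)) (B - Range (insert (a, b) M0)) (P - insert (a, b) M0)"
      by (rule perfect_split[OF P sub])
    moreover have "A - Domain (insert (a, b) M0) = A0 - {a}" "B - Range (insert (a, b) M0) = B0 - {b}"
      unfolding A0_def B0_def by auto
    ultimately have "\<exists>R. is_perfect_matching x M (A0 - {a}) (B0 - {b}) R" by auto
    moreover have "b \<in> B0" unfolding B0_def using e(2) bR by blast
    ultimately have "G z a" unfolding G_def b by blast
    thus ?thesis using z(1) by blast
  qed
  have exT: "\<exists>i<length zs. a \<in> T i" if a: "a \<in> Ai'" for a
  proof -
    obtain z where z: "z \<in> Zb M" "G z a" using exG[OF a] by blast
    obtain k where k: "k < length zs" "zs ! k = z" using z(1) zs(1) by (metis in_set_conv_nth)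
    define i where "i = (LEAST i. G (zs ! i) a)"
    have Gi: "G (zs ! i) a" unfolding i_def by (rule LeastI[of _ k]) (use z(2) k(2) in simp)
    have ik: "i \<le> k" unfolding i_def by (rule Least_le) (use z(2) k(2) in simp)
    have "\<forall>j<i. \<not> G (zs ! j) a" unfolding i_def using not_less_Least by blast
    hence "a \<in> T i" unfolding T_def using a Gi by blast
    thus ?thesis using ik k(1) by (intro exI[of _ i]) simp
  qed
  have newE: "\<exists>i<length zs. a \<in> T i \<and> b = tadd a (lin x (zs ! i))" if "(a, b) \<in> New" for a b
    using that unfolding New_def by blast
  have newedge: "a \<in> A \<and> a \<notin> Domain M0 \<and> b \<in> B \<and> b \<notin> Range M0 \<and> tsub b a = lin x (zs ! i) \<and> tsub b a \<in> VM x M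
      \<and> (\<exists>R. is_perfect_matching x M (A0 - {a}) (B0 - {b}) R)"
    if "i < length zs" "a \<in> T i" "b = tadd a (lin x (zs ! i))" for a b i
  proof -
    have G: "G (zs ! i) a" and aA: "a \<in> A0" using that(2) unfolding T_def Ai'_def A0_def using Ai_sub by auto
    have bB: "b \<in> B0" and R: "\<exists>R. is_perfect_matching x M (A0 - {a}) (B0 - {b}) R"
      using G that(3) unfolding G_def by auto
    have ts: "tsub b a = lin x (zs ! i)" using that(3) tsub_tadd[of "lin x (zs ! i)" a] by simp
    have "lin x (zs ! i) \<in> VM x M" using zsZ[OF that(1)] unfolding VM_eq by blast
    thus ?thesis using aA bB R ts unfolding A0_def B0_def by auto
  qed
  have newext: "extendable x M A B (insert (a, b) M0)" if h: "(a, b) \<in> New" for a b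
  proof -
    obtain i where i: "i < length zs" "a \<in> T i" "b = tadd a (lin x (zs ! i))" using newE[OF h] by blast
    have ne: "a \<in> A" "a \<notin> Domain M0" "b \<in> B" "b \<notin> Range M0" "tsub b a \<in> VM x M"
      using newedge[OF i] by auto
    obtain R where "is_perfect_matching x M (A0 - {a}) (B0 - {b}) R" using newedge[OF i] by blast
    thus ?thesis unfolding A0_def B0_def by (intro ext_insert[OF M0m ne(1,2) ne(3,4) ne(5)])
  qed
  have sp: "\<forall>u\<in>torus. \<forall>n\<in>section_set x Ai u. \<forall>m\<in>section_set x Ai u. n \<noteq> m \<longrightarrow> int (r + 4 * M) < linf_dist n m"
    using sparse unfolding sparse_def by assumption
  have sec: "n \<in> section_set x Ai u" if "tadd u (lin x n) \<in> Ai" for n u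
    using that unfolding section_set_def by simp
  have new_inj: "a = a'" if h: "(a, b) \<in> New" "(a', b) \<in> New" for a a' b
  proof (rule ccontr)
    assume ne: "a \<noteq> a'"
    obtain i where i: "i < length zs" "a \<in> T i" "b = tadd a (lin x (zs ! i))" using newE[OF h(1)] by blast
    obtain i' where i': "i' < length zs" "a' \<in> T i'" "b = tadd a' (lin x (zs ! i'))" using newE[OF h(2)] by blast
    let ?z = "zs ! i" and ?z' = "zs ! i'"
    have at: "a \<in> torus" "a' \<in> torus" "a \<in> Ai" "a' \<in> Ai" using TAi i(2) i'(2) by blast+
    have "tsub b a' = lin x ?z'" using i'(3) tsub_tadd[of "lin x ?z'" a'] by simp
    hence a': "a' = tadd a (lin x (?z - ?z'))" by (rule orbit_bwd[OF _ i(3) at(2)])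
    have h0: "0 \<in> section_set x Ai a" using sec[of a 0] at(1,3) by simp
    have h1: "?z - ?z' \<in> section_set x Ai a" using sec[of a "?z - ?z'"] a' at(4) by simp
    have h2: "(0::int^'d) \<noteq> ?z - ?z'"
    proof
      assume "(0::int^'d) = ?z - ?z'"
      hence "a' = tadd a (lin x 0)" using a' by simp
      hence "a' = a" using at(1) by simp
      thus False using ne by simp
    qed
    have "int (r + 4 * M) < linf_dist 0 (?z - ?z')" by (rule sp[rule_format, OF at(1) h0 h1 h2])
    moreover have "linf_dist 0 (?z - ?z') \<le> int (2 * M)"
      unfolding linf_dist_le_iff
    proof
      fix j
      have "\<bar>?z $ j\<bar> \<le> int M" "\<bar>?z' $ j\<bar> \<le> int M" using zsZ[OF i(1)] zsZ[OF i'(1)] unfolding Zb_def by blast+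
      moreover have "(0::int^'d) $ j - (?z - ?z') $ j = ?z' $ j - ?z $ j" by simp
      ultimately show "\<bar>(0::int^'d) $ j - (?z - ?z') $ j\<bar> \<le> int (2 * M)" by (simp only:)
    qed
    ultimately show False by simp
  qed
  have New_m: "is_matching x M A B New"
  proof -
    have "New \<subseteq> edges x M A B"
    proof
      fix e assume "e \<in> New"
      then obtain a b where ab: "e = (a, b)" "(a, b) \<in> New" by (cases e) blast
      obtain i where i: "i < length zs" "a \<in> T i" "b = tadd a (lin x (zs ! i))" using newE[OF ab(2)] by blast
      have ne: "a \<in> A" "b \<in> B" "tsub b a \<in> VM x M" using newedge[OF i] by blast+
      show "e \<in> edges x M A B" unfolding ab(1) by (rule edgesI[OF ne])
    qed
    moreover have "(a = a' \<longleftrightarrow> b = b')" if h: "(a, b) \<in> New" "(a', b') \<in> New" for a b a' b'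
    proof
      assume "a = a'"
      obtain i where i: "i < length zs" "a \<in> T i" "b = tadd a (lin x (zs ! i))" using newE[OF h(1)] by blast
      obtain i' where i': "i' < length zs" "a' \<in> T i'" "b' = tadd a' (lin x (zs ! i'))" using newE[OF h(2)] by blast
      have "i = i'" using T_unique i(2) i'(2) \<open>a = a'\<close> by blast
      thus "b = b'" using i(3) i'(3) \<open>a = a'\<close> by simp
    next
      assume "b = b'"
      thus "a = a'" using new_inj h by blast
    qed
    ultimately show ?thesis unfolding is_matching_def by blast
  qed
  have M1m: "is_matching x M A B M1" unfolding M1_def
  proof (rule matching_union[OF M0m New_m])
    fix a b a' b' assume "(a, b) \<in> M0" "(a', b') \<in> New"
    moreover obtain i where i: "i < length zs" "a' \<in> T i" "b' = tadd a' (lin x (zs ! i))"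
      using newE[OF \<open>(a', b') \<in> New\<close>] by blast
    ultimately show "a \<noteq> a' \<and> b \<noteq> b'" using newedge[OF i] by blast
  qed
  have dom: "Ai \<subseteq> Domain M1"
  proof
    fix a assume a: "a \<in> Ai"
    show "a \<in> Domain M1"
    proof (cases "a \<in> Domain M0")
      case True thus ?thesis unfolding M1_def by blast
    next
      case False
      hence "a \<in> Ai'" using a unfolding Ai'_def by blast
      then obtain i where i: "i < length zs" "a \<in> T i" using exT by blast
      hence "(a, tadd a (lin x (zs ! i))) \<in> New" unfolding New_def by blast
      thus ?thesis unfolding M1_def by blast
    qed
  qed
  have ext: "\<forall>e\<in>M1 - M0. extendable x M A B (insert e M0)"
  proof
    fix e assume "e \<in> M1 - M0"
    then obtain a b where "e = (a, b)" "(a, b) \<in> New" unfolding M1_def by (cases e) blast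
    thus "extendable x M A B (insert e M0)" using newext by simp
  qed
  have bmM1: "baire_matching x M M1" unfolding baire_matching_def
  proof
    fix v assume v: "v \<in> VM x M"
    let ?S = "{a. \<exists>b. (a, b) \<in> M1 \<and> tsub b a = v}"
    have St: "?S \<subseteq> torus" using M1m At unfolding is_matching_def edges_def by blast
    have domM0bm: "baire_measurable_in torus_top (Domain M0)"
      by (rule bmp_bm[OF bmp_dom]) (use M0e At in blast)
    have cI: "countable {..<length zs}" by simp
    have cJ: "countable {..<i}" for i :: nat by simp
    have "bmp (\<lambda>c. c \<in> D v \<or> (\<exists>i\<in>{..<length zs}. (c \<in> Ai \<and> \<not> c \<in> Domain M0 \<and> G (zs ! i) c \<and> (\<forall>j\<in>{..<i}. \<not> G (zs ! j) c)) \<and> lin x (zs ! i) = v))"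
      by (intro bmp_disj bmp_mem[OF Dbm[OF v]] bmp_ex[OF cI] bmp_conj bmp_mem[OF Ai_bm] bmp_not
          bmp_mem[OF domM0bm] bmpG bmp_all[OF cJ] bmp_const)
    moreover have "(c \<in> D v \<or> (\<exists>i\<in>{..<length zs}. (c \<in> Ai \<and> \<not> c \<in> Domain M0 \<and> G (zs ! i) c \<and> (\<forall>j\<in>{..<i}. \<not> G (zs ! j) c)) \<and> lin x (zs ! i) = v))
        \<longleftrightarrow> c \<in> ?S" for c
    proof
      assume "c \<in> D v \<or> (\<exists>i\<in>{..<length zs}. (c \<in> Ai \<and> \<not> c \<in> Domain M0 \<and> G (zs ! i) c \<and> (\<forall>j\<in>{..<i}. \<not> G (zs ! j) c)) \<and> lin x (zs ! i) = v)"
      thus "c \<in> ?S"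
      proof
        assume "c \<in> D v" thus "c \<in> ?S" unfolding D_def M1_def by blast
      next
        assume "\<exists>i\<in>{..<length zs}. (c \<in> Ai \<and> \<not> c \<in> Domain M0 \<and> G (zs ! i) c \<and> (\<forall>j\<in>{..<i}. \<not> G (zs ! j) c)) \<and> lin x (zs ! i) = v"
        then obtain i where i: "i < length zs" "c \<in> Ai" "c \<notin> Domain M0" "G (zs ! i) c" "\<forall>j<i. \<not> G (zs ! j) c" "lin x (zs ! i) = v"
          by auto
        have "c \<in> T i" unfolding T_def Ai'_def using i by blast
        hence "(c, tadd c (lin x (zs ! i))) \<in> New" unfolding New_def using i(1) by blast
        moreover have "tsub (tadd c (lin x (zs ! i))) c = lin x (zs ! i)" by (rule tsub_tadd[OF lin_in_torus])
        hence "tsub (tadd c (lin x (zs ! i))) c = v" using i(6) by simp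
        ultimately show "c \<in> ?S" unfolding M1_def by blast
      qed
    next
      assume "c \<in> ?S"
      then obtain b where b: "(c, b) \<in> M1" "tsub b c = v" by blast
      show "c \<in> D v \<or> (\<exists>i\<in>{..<length zs}. (c \<in> Ai \<and> \<not> c \<in> Domain M0 \<and> G (zs ! i) c \<and> (\<forall>j\<in>{..<i}. \<not> G (zs ! j) c)) \<and> lin x (zs ! i) = v)"
      proof (cases "(c, b) \<in> M0")
        case True thus ?thesis unfolding D_def using b(2) by blast
      next
        case False
        hence "(c, b) \<in> New" using b(1) unfolding M1_def by blast
        then obtain i where i: "i < length zs" "c \<in> T i" "b = tadd c (lin x (zs ! i))" using newE by blast
        have "tsub b c = lin x (zs ! i)" using newedge[OF i] by blast
        hence "lin x (zs ! i) = v" using b(2) by simp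
        moreover have "c \<in> Ai \<and> \<not> c \<in> Domain M0 \<and> G (zs ! i) c \<and> (\<forall>j\<in>{..<i}. \<not> G (zs ! j) c)"
          using i(2) unfolding T_def Ai'_def by auto
        ultimately show ?thesis using i(1) by auto
      qed
    qed
    ultimately have "bmp (\<lambda>c. c \<in> ?S)" by (rule bmp_cong[rotated])
    thus "baire_measurable_in torus_top ?S" by (rule bmp_bm[OF _ St])
  qed
  have dist: "\<forall>u\<in>torus. \<forall>p\<in>edge_section x (M1 - M0) u. \<forall>q\<in>edge_section x (M1 - M0) u.
          p \<noteq> q \<longrightarrow> (\<forall>s\<in>{fst p, snd p}. \<forall>t\<in>{fst q, snd q}. linf_dist s t > int (r + 2 * M))"
  proof (intro ballI impI)
    fix u p q s t assume u: "u \<in> torus" and p: "p \<in> edge_section x (M1 - M0) u" and q: "q \<in> edge_section x (M1 - M0) u"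
      and pq: "p \<noteq> q" and s: "s \<in> {fst p, snd p}" and t: "t \<in> {fst q, snd q}"
    have key: "\<exists>i<length zs. tadd u (lin x (fst e)) \<in> T i \<and> snd e = fst e + zs ! i"
      if "e \<in> edge_section x (M1 - M0) u" for e
    proof -
      have "(tadd u (lin x (fst e)), tadd u (lin x (snd e))) \<in> New"
        using that unfolding edge_section_def M1_def by (cases e) auto
      then obtain i where i: "i < length zs" "tadd u (lin x (fst e)) \<in> T i"
        "tadd u (lin x (snd e)) = tadd (tadd u (lin x (fst e))) (lin x (zs ! i))" using newE by blast
      have "tadd u (lin x (snd e)) = tadd u (lin x (fst e + zs ! i))" using i(3) by simp
      hence "snd e = fst e + zs ! i" using free by simp
      thus ?thesis using i(1,2) by blast
    qed
    obtain i where i: "i < length zs" "tadd u (lin x (fst p)) \<in> T i" "snd p = fst p + zs ! i" using key[OF p] by blast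
    obtain i' where i': "i' < length zs" "tadd u (lin x (fst q)) \<in> T i'" "snd q = fst q + zs ! i'" using key[OF q] by blast
    have ne: "fst p \<noteq> fst q"
    proof
      assume "fst p = fst q"
      hence "i = i'" using T_unique i(2) i'(2) by simp
      hence "snd p = snd q" using i(3) i'(3) \<open>fst p = fst q\<close> by simp
      thus False using pq \<open>fst p = fst q\<close> by (simp add: prod_eq_iff)
    qed
    have h0: "fst p \<in> section_set x Ai u" using sec TAi i(2) by blast
    have h1: "fst q \<in> section_set x Ai u" using sec TAi i'(2) by blast
    have far: "int (r + 4 * M) < linf_dist (fst p) (fst q)" by (rule sp[rule_format, OF u h0 h1 ne])
    have ds: "linf_dist (fst p) s \<le> int M"
    proof -
      have "linf_dist (fst p) (fst p) \<le> int M" unfolding linf_dist_le_iff by simp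
      moreover have "linf_dist (fst p) (snd p) \<le> int M" using i(3) linf_dist_Zb[OF zsZ[OF i(1)]] by simp
      ultimately show ?thesis using s by auto
    qed
    have dt: "linf_dist t (fst q) \<le> int M"
    proof -
      have "linf_dist (fst q) (fst q) \<le> int M" unfolding linf_dist_le_iff by simp
      moreover have "linf_dist (fst q) (snd q) \<le> int M" using i'(3) linf_dist_Zb[OF zsZ[OF i'(1)]] by simp
      ultimately show ?thesis using t linf_dist_sym by (metis empty_iff insert_iff)
    qed
    have "int M + int M + int (r + 2 * M) < linf_dist (fst p) (fst q)" using far by simp
    thus "int (r + 2 * M) < linf_dist s t" by (rule linf_dist_tri[OF ds dt])
  qed
  have "M0 \<subseteq> M1" unfolding M1_def by blast
  thus ?thesis using M1m bmM1 dom dist ext by blast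
qed




theorem lemma5p1:
  fixes x :: "'d::finite \<Rightarrow> real^'k"
    and M r :: nat
    and A B Ai Bi :: "(real^'k) set"
    and M0 :: "((real^'k) \<times> (real^'k)) set"
  assumes x_torus: "\<forall>j. x j \<in> torus"
    and x_free: "free_vecs x"
    and M_pos: "M \<ge> 1"
    and A_bm: "baire_measurable_in torus_top A"
    and B_bm: "baire_measurable_in torus_top B"
    and Ai_sub: "Ai \<subseteq> A" and Bi_sub: "Bi \<subseteq> B"
    and Ai_bm: "baire_measurable_in torus_top Ai"
    and Bi_bm: "baire_measurable_in torus_top Bi"
    and one_empty: "Ai = {} \<or> Bi = {}"
    and sparse: "sparse x (r + 4 * M) (Ai \<union> Bi)"
    and M0_bm: "baire_matching x M M0"
    and M0_ext: "extendable x M A B M0"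
  shows "\<exists>M1. M0 \<subseteq> M1 \<and> is_matching x M A B M1 \<and> baire_matching x M M1
    \<and> Ai \<subseteq> Domain M1 \<and> Bi \<subseteq> Range M1
    \<and> (\<forall>u\<in>torus. \<forall>p\<in>edge_section x (M1 - M0) u. \<forall>q\<in>edge_section x (M1 - M0) u.
          p \<noteq> q \<longrightarrow> (\<forall>s\<in>{fst p, snd p}. \<forall>t\<in>{fst q, snd q}. linf_dist s t > int (r + 2 * M)))
    \<and> (\<forall>e\<in>M1 - M0. extendable x M A B (insert e M0))"
proof (cases "Bi = {}")
  case True
  have sp: "sparse x (r + 4 * M) Ai" using sparse True by simp
  obtain M1 where M1: "M0 \<subseteq> M1" "is_matching x M A B M1" "baire_matching x M M1" "Ai \<subseteq> Domain M1"
    "\<forall>u\<in>torus. \<forall>p\<in>edge_section x (M1 - M0) u. \<forall>q\<in>edge_section x (M1 - M0) u.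
          p \<noteq> q \<longrightarrow> (\<forall>s\<in>{fst p, snd p}. \<forall>t\<in>{fst q, snd q}. linf_dist s t > int (r + 2 * M))"
    "\<forall>e\<in>M1 - M0. extendable x M A B (insert e M0)"
    using A_case[OF x_free A_bm B_bm Ai_sub Ai_bm sp M0_bm M0_ext] by (elim exE conjE)
  have M1r: "Bi \<subseteq> Range M1" using True by simp
  show ?thesis
    apply (rule exI[of _ M1])
    apply (intro conjI)
          apply (fact M1(1))
         apply (fact M1(2))
        apply (fact M1(3))
       apply (fact M1(4))
      apply (fact M1r)
     apply (fact M1(5))
    apply (fact M1(6))
    done
next
  case False
  hence Ai: "Ai = {}" using one_empty by simp
  have sp: "sparse x (r + 4 * M) Bi" using sparse Ai by simp
  have M0m: "is_matching x M A B M0" using M0_ext unfolding extendable_def by blast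
  have At: "A \<subseteq> torus" and Bt: "B \<subseteq> torus" using A_bm B_bm by (auto dest: bm_torus_sub)
  have M0c_bm: "baire_matching x M (converse M0)" by (rule baire_matching_converse[OF x_free M0_bm M0m At Bt])
  have M0c_ext: "extendable x M B A (converse M0)" by (rule extendable_converse[OF M0_ext])
  obtain M1' where M1': "converse M0 \<subseteq> M1'" "is_matching x M B A M1'" "baire_matching x M M1'" "Bi \<subseteq> Domain M1'"
    "\<forall>u\<in>torus. \<forall>p\<in>edge_section x (M1' - converse M0) u. \<forall>q\<in>edge_section x (M1' - converse M0) u.
          p \<noteq> q \<longrightarrow> (\<forall>s\<in>{fst p, snd p}. \<forall>t\<in>{fst q, snd q}. linf_dist s t > int (r + 2 * M))"
    "\<forall>e\<in>M1' - converse M0. extendable x M B A (insert e (converse M0))"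
    using A_case[OF x_free B_bm A_bm Bi_sub Bi_bm sp M0c_bm M0c_ext] by (elim exE conjE)
  define M1 where "M1 = converse M1'"
  have c1: "M0 \<subseteq> M1" unfolding M1_def using M1'(1) converse_mono[of M0 "M1'\<inverse>"] by simp
  have c2: "is_matching x M A B M1" unfolding M1_def by (rule matching_converse[OF M1'(2)])
  have c3: "baire_matching x M M1" unfolding M1_def by (rule baire_matching_converse[OF x_free M1'(3) M1'(2) Bt At])
  have c4: "Ai \<subseteq> Domain M1" using Ai by simp
  have c5: "Bi \<subseteq> Range M1" unfolding M1_def using M1'(4) by simp
  have diff: "M1 - M0 = converse (M1' - converse M0)" unfolding M1_def by blast
  have c6: "\<forall>u\<in>torus. \<forall>p\<in>edge_section x (M1 - M0) u. \<forall>q\<in>edge_section x (M1 - M0) u.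
          p \<noteq> q \<longrightarrow> (\<forall>s\<in>{fst p, snd p}. \<forall>t\<in>{fst q, snd q}. linf_dist s t > int (r + 2 * M))"
  proof (intro ballI impI)
    fix u p q s t assume u: "u \<in> torus" and p: "p \<in> edge_section x (M1 - M0) u"
      and q: "q \<in> edge_section x (M1 - M0) u" and pq: "p \<noteq> q"
      and s: "s \<in> {fst p, snd p}" and t: "t \<in> {fst q, snd q}"
    obtain p' where p': "p' \<in> edge_section x (M1' - converse M0) u" "p = (snd p', fst p')"
      using p unfolding diff edge_section_converse by auto
    obtain q' where q': "q' \<in> edge_section x (M1' - converse M0) u" "q = (snd q', fst q')"
      using q unfolding diff edge_section_converse by auto
    have "p' \<noteq> q'" using pq p'(2) q'(2) by auto
    moreover have "s \<in> {fst p', snd p'}" "t \<in> {fst q', snd q'}" using s t p'(2) q'(2) by auto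
    ultimately show "int (r + 2 * M) < linf_dist s t" by (rule M1'(5)[rule_format, OF u p'(1) q'(1)])
  qed
  have c7: "\<forall>e\<in>M1 - M0. extendable x M A B (insert e M0)"
  proof
    fix e assume e: "e \<in> M1 - M0"
    obtain a b where ab: "e = (a, b)" by (cases e)
    have "(b, a) \<in> M1' - converse M0" using e ab unfolding M1_def by auto
    hence "extendable x M B A (insert (b, a) (converse M0))" using M1'(6) by blast
    hence "extendable x M A B (converse (insert (b, a) (converse M0)))" by (rule extendable_converse)
    moreover have "converse (insert (b, a) (converse M0)) = insert e M0" using ab by auto
    ultimately show "extendable x M A B (insert e M0)" by simp
  qed
  show ?thesis
    apply (rule exI[of _ M1])
    apply (intro conjI)
          apply (fact c1)
         apply (fact c2)
        apply (fact c3)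
       apply (fact c4)
      apply (fact c5)
     apply (fact c6)
    apply (fact c7)
    done
qed



end
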